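(* Let $r>0$, let $m$ be a hyperbolic line in $\mathbb{H}^2$, and let $H$ be one of the two connected components of the set of points at hyperbolic distance exactly $r$ from $m$ (a hypercycle with axis $m$). Let $b,b'$ be points on $m$ with $d(b,b')=\tanh r$, and let $a,a'\in H$ be the points such that the segments $ba$ and $b'a'$ are perpendicular to $m$. Let the box be the closed region bounded by the segments $ab$, $bb'$, $b'a'$ and the arc of $H$ between $a'$ and $a$. Then the box has hyperbolic diameter at most $2r$.
   Context: $\mathbb{H}^2$ is the hyperbolic plane of Gaussian curvature $-1$ with hyperbolic distance $d$. *)

theory Defs
  imports "HOL-Analysis.Analysis"
begin

text \<open>Model of the hyperbolic plane H^2 (curvature -1): the upper half-plane.\<close>

definition UHP :: "complex set" where
  "UHP = {z. Im z > 0}"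

definition hdist :: "complex \<Rightarrow> complex \<Rightarrow> real" where
  "hdist z w = arcosh (1 + (cmod (z - w))^2 / (2 * Im z * Im w))"

definition geodesic_line :: "(real \<Rightarrow> complex) \<Rightarrow> bool" where
  "geodesic_line \<gamma> \<longleftrightarrow> range \<gamma> \<subseteq> UHP \<and> (\<forall>s t. hdist (\<gamma> s) (\<gamma> t) = \<bar>s - t\<bar>)"

definition hdist_set :: "complex \<Rightarrow> complex set \<Rightarrow> real" where
  "hdist_set p S = Inf ((\<lambda>q. hdist p q) ` S)"

definition hypercycle :: "(real \<Rightarrow> complex) \<Rightarrow> real \<Rightarrow> complex set \<Rightarrow> bool" where
  "hypercycle \<gamma> r H \<longleftrightarrow> H \<in> components {p \<in> UHP. hdist_set p (range \<gamma>) = r}"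

definition hsegment :: "complex \<Rightarrow> complex \<Rightarrow> complex set" where
  "hsegment x y = {z \<in> UHP. hdist x z + hdist z y = hdist x y}"

text \<open>Angles in the upper half-plane model are Euclidean angles (conformality),
  so perpendicularity is orthogonality of the tangent vectors.\<close>
definition perp_segment :: "complex \<Rightarrow> complex \<Rightarrow> (real \<Rightarrow> complex) \<Rightarrow> bool" where
  "perp_segment b a \<gamma> \<longleftrightarrow>
     (\<exists>\<sigma> t0 u v. hdist b a > 0 \<and>
        \<sigma> ` {0..hdist b a} \<subseteq> UHP \<and>
        (\<forall>s\<in>{0..hdist b a}. \<forall>t\<in>{0..hdist b a}. hdist (\<sigma> s) (\<sigma> t) = \<bar>s - t\<bar>) \<and>
        \<sigma> 0 = b \<and> \<sigma> (hdist b a) = a \<and> \<gamma> t0 = b \<and>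
        (\<sigma> has_vector_derivative u) (at 0 within {0..hdist b a}) \<and>
        (\<gamma> has_vector_derivative v) (at t0) \<and>
        Re (u * cnj v) = 0)"

definition curve_arc :: "complex set \<Rightarrow> complex \<Rightarrow> complex \<Rightarrow> complex set" where
  "curve_arc H x y = \<Inter>{C. C \<subseteq> H \<and> connected C \<and> x \<in> C \<and> y \<in> C}"

definition hbounded :: "complex set \<Rightarrow> bool" where
  "hbounded S \<longleftrightarrow> (\<exists>c\<in>UHP. \<exists>R. \<forall>z\<in>S. hdist c z \<le> R)"

definition region_bounded_by :: "complex set \<Rightarrow> complex set" where
  "region_bounded_by J = J \<union> \<Union>{C \<in> components (UHP - J). hbounded C}"

definition hbox :: "complex \<Rightarrow> complex \<Rightarrow> complex \<Rightarrow> complex \<Rightarrow> complex set \<Rightarrow> complex set" where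
  "hbox a b b' a' H = region_bounded_by
     (hsegment a b \<union> hsegment b b' \<union> hsegment b' a' \<union> curve_arc H a' a)"

end

theory Submission
  imports Defs
begin


definition mob :: "real \<Rightarrow> real \<Rightarrow> real \<Rightarrow> real \<Rightarrow> complex \<Rightarrow> complex" where
  "mob p q s t z = (of_real p * z + of_real q) / (of_real s * z + of_real t)"

lemma mob_den_nz:
  assumes "Im z > 0" "p * t - q * s \<noteq> 0"
  shows "of_real s * z + of_real t \<noteq> 0"
proof
  assume h: "of_real s * z + of_real t = 0"
  hence "Im (of_real s * z + of_real t) = 0" "Re (of_real s * z + of_real t) = 0" by simp_all
  hence "s * Im z = 0" "s * Re z + t = 0" by simp_all
  hence "s = 0" "t = 0" using assms(1) by auto
  thus False using assms(2) by simp
qed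

lemma mob_Im:
  assumes "Im z > 0" "p * t - q * s \<noteq> 0"
  shows "Im (mob p q s t z) = (p * t - q * s) * Im z / (cmod (of_real s * z + of_real t))^2"
proof -
  have "(cmod (of_real s * z + of_real t))^2 = (s * Re z + t)^2 + (s * Im z)^2"
    by (simp add: cmod_power2)
  thus ?thesis unfolding mob_def
    by (simp add: Im_divide power2_eq_square algebra_simps)
qed

lemma mob_UHP:
  assumes "z \<in> UHP" "p * t - q * s > 0"
  shows "mob p q s t z \<in> UHP"
proof -
  have "Im z > 0" using assms by (simp add: UHP_def)
  moreover have "cmod (of_real s * z + of_real t) > 0" using mob_den_nz[OF \<open>Im z > 0\<close>, of p t q s] assms by simp
  ultimately show ?thesis using mob_Im[of z p t q s] assms by (simp add: UHP_def)
qed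

lemma mob_diff:
  assumes "Im z > 0" "Im w > 0" "p * t - q * s \<noteq> 0"
  shows "mob p q s t z - mob p q s t w =
     of_real (p * t - q * s) * (z - w) / ((of_real s * z + of_real t) * (of_real s * w + of_real t))"
  using mob_den_nz[OF assms(1,3)] mob_den_nz[OF assms(2,3)]
  unfolding mob_def
  by (simp add: field_simps)

lemma hdist_sym: "hdist z w = hdist w z"
  unfolding hdist_def by (simp add: norm_minus_commute mult.commute mult.left_commute)

lemma hdist_mob:
  assumes "z \<in> UHP" "w \<in> UHP" "p * t - q * s > 0"
  shows "hdist (mob p q s t z) (mob p q s t w) = hdist z w"
proof -
  have z: "Im z > 0" and w: "Im w > 0" using assms by (auto simp: UHP_def)
  define A where "A = cmod (of_real s * z + of_real t)"
  define B where "B = cmod (of_real s * w + of_real t)"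
  define D where "D = p * t - q * s"
  have A: "A > 0" using mob_den_nz[OF z, of p t q s] assms unfolding A_def by simp
  have B: "B > 0" using mob_den_nz[OF w, of p t q s] assms unfolding B_def by simp
  have D: "D > 0" using assms D_def by simp
  have "(cmod (mob p q s t z - mob p q s t w))^2 = D^2 * (cmod (z - w))^2 / (A^2 * B^2)"
    unfolding mob_diff[OF z w, of p t q s, OF D[unfolded D_def, THEN less_imp_neq, symmetric]]
    unfolding norm_divide norm_mult norm_of_real
    using D by (simp add: A_def B_def D_def power_mult_distrib power_divide)
  moreover have "Im (mob p q s t z) = D * Im z / A^2" "Im (mob p q s t w) = D * Im w / B^2"
    using mob_Im[OF z, of p t q s] mob_Im[OF w, of p t q s] D unfolding A_def B_def D_def by auto
  ultimately have "(cmod (mob p q s t z - mob p q s t w))^2 / (2 * Im (mob p q s t z) * Im (mob p q s t w))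
      = (D^2 * (cmod (z - w))^2 / (A^2 * B^2)) / (2 * (D * Im z / A^2) * (D * Im w / B^2))"
    by simp
  also have "\<dots> = (cmod (z - w))^2 / (2 * Im z * Im w)"
    using A B D z w by (simp add: field_simps power2_eq_square)
  finally have "(cmod (mob p q s t z - mob p q s t w))^2 / (2 * Im (mob p q s t z) * Im (mob p q s t w))
      = (cmod (z - w))^2 / (2 * Im z * Im w)" .
  thus ?thesis unfolding hdist_def by simp
qed

lemma mob_inv:
  assumes "Im z > 0" "p * t - q * s \<noteq> 0"
  shows "mob t (-q) (-s) p (mob p q s t z) = z"
proof -
  define N where "N = of_real p * z + of_real q"
  define Dn where "Dn = of_real s * z + of_real t"
  have nz: "Dn \<noteq> 0" using mob_den_nz[OF assms] unfolding Dn_def .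
  have dnz: "complex_of_real (p * t - q * s) \<noteq> 0" using assms(2) of_real_eq_0_iff by blast
  have e1: "of_real t * N - of_real q * Dn = of_real (p * t - q * s) * z"
    unfolding N_def Dn_def by (simp add: algebra_simps)
  have e2: "- of_real s * N + of_real p * Dn = of_real (p * t - q * s)"
    unfolding N_def Dn_def by (simp add: algebra_simps)
  have "mob t (-q) (-s) p (N / Dn) = (Dn * (of_real t * N - of_real q * Dn)) / (Dn * (- of_real s * N + of_real p * Dn))"
    unfolding mob_def using nz by (simp add: field_simps)
  also have "\<dots> = (of_real t * N - of_real q * Dn) / (- of_real s * N + of_real p * Dn)"
    using nz by simp
  also have "\<dots> = z" using e1 e2 dnz by simp
  finally show ?thesis unfolding mob_def N_def Dn_def .
qed

lemma mob_inv_det: "t * p - (-q) * (-s) = p * t - q * (s::real)" by (simp add: mult.commute)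

lemma mob_inv2:
  assumes "Im z > 0" "p * t - q * s \<noteq> 0"
  shows "mob p q s t (mob t (-q) (-s) p z) = z"
  using mob_inv[of z t p "-q" "-s"] assms by (simp add: mult.commute)

lemma mob_cont: "p * t - q * s \<noteq> 0 \<Longrightarrow> continuous_on UHP (mob p q s t)"
  unfolding mob_def
  using mob_den_nz[of _ p t q s]
  by (intro continuous_intros) (auto simp: UHP_def)

lemma mob_deriv:
  assumes "Im z > 0" "p * t - q * s \<noteq> 0"
  shows "(mob p q s t has_field_derivative
      of_real (p * t - q * s) / (of_real s * z + of_real t)^2) (at z)"
proof -
  have nz: "of_real s * z + of_real t \<noteq> 0" using mob_den_nz[OF assms] .
  have d1: "((\<lambda>z. of_real p * z + of_real q) has_field_derivative of_real p) (at z)"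
    by (auto intro!: derivative_eq_intros)
  have d2: "((\<lambda>z. of_real s * z + of_real t) has_field_derivative of_real s) (at z)"
    by (auto intro!: derivative_eq_intros)
  have eq: "(of_real p * (of_real s * z + of_real t) - (of_real p * z + of_real q) * of_real s)
       / ((of_real s * z + of_real t) * (of_real s * z + of_real t))
     = of_real (p * t - q * s) / (of_real s * z + of_real t)^2"
    by (simp add: power2_eq_square algebra_simps)
  show ?thesis unfolding mob_def
    using DERIV_divide[OF d1 d2 nz] unfolding eq .
qed



lemma UHP_iff: "z \<in> UHP \<longleftrightarrow> Im z > 0" by (simp add: UHP_def)

lemma hdist_arg_ge1: "z \<in> UHP \<Longrightarrow> w \<in> UHP \<Longrightarrow> 1 \<le> 1 + (cmod (z - w))^2 / (2 * Im z * Im w)"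
  by (simp add: UHP_iff)

lemma cosh_hdist: "z \<in> UHP \<Longrightarrow> w \<in> UHP \<Longrightarrow> cosh (hdist z w) = 1 + (cmod (z - w))^2 / (2 * Im z * Im w)"
  unfolding hdist_def using hdist_arg_ge1 by simp

lemma hdist_nonneg: "z \<in> UHP \<Longrightarrow> w \<in> UHP \<Longrightarrow> hdist z w \<ge> 0"
  unfolding hdist_def using hdist_arg_ge1 by simp

lemma hdist_from_cosh:
  assumes "z \<in> UHP" "w \<in> UHP" "cosh (hdist z w) = cosh d"
  shows "hdist z w = \<bar>d\<bar>"
  using assms hdist_nonneg[OF assms(1,2)] by simp

lemma hdist_le_from_cosh:
  assumes "z \<in> UHP" "w \<in> UHP" "cosh (hdist z w) \<le> cosh d" "d \<ge> 0"
  shows "hdist z w \<le> d"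
  using assms hdist_nonneg[OF assms(1,2)] cosh_real_nonneg_le_iff by blast

lemma iexp_UHP: "\<i> * of_real (exp a) \<in> UHP" by (simp add: UHP_iff)

lemma cosh_exp: "cosh (x::real) = (exp x + inverse (exp x)) / 2"
  by (simp add: cosh_def exp_minus)

lemma hdist_iexp: "hdist (\<i> * of_real (exp a)) (\<i> * of_real (exp b)) = \<bar>a - b\<bar>"
proof (rule hdist_from_cosh[OF iexp_UHP iexp_UHP])
  have "\<i> * of_real (exp a) - \<i> * of_real (exp b) = \<i> * of_real (exp a - exp b)"
    by (simp add: algebra_simps)
  hence "cmod (\<i> * of_real (exp a) - \<i> * of_real (exp b)) = \<bar>exp a - exp b\<bar>"
    by (simp only: norm_mult norm_ii norm_of_real) simp
  hence "cosh (hdist (\<i> * of_real (exp a)) (\<i> * of_real (exp b))) = 1 + (exp a - exp b)^2 / (2 * exp a * exp b)"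
    by (simp add: cosh_hdist[OF iexp_UHP iexp_UHP])
  also have "\<dots> = cosh (a - b)"
    by (simp add: cosh_exp exp_diff field_simps power2_eq_square)
  finally show "cosh (hdist (\<i> * of_real (exp a)) (\<i> * of_real (exp b))) = cosh (a - b)" .
qed

lemma mob_comp:
  assumes "Im z > 0" "p' * t' - q' * s' \<noteq> 0"
  shows "mob p q s t (mob p' q' s' t' z) =
    mob (p * p' + q * s') (p * q' + q * t') (s * p' + t * s') (s * q' + t * t') z"
proof -
  define N where "N = of_real p' * z + of_real q'"
  define Dn where "Dn = of_real s' * z + of_real t'"
  have nz: "Dn \<noteq> 0" using mob_den_nz[OF assms] unfolding Dn_def .
  have "mob p q s t (N / Dn) = (Dn * (of_real p * N + of_real q * Dn)) / (Dn * (of_real s * N + of_real t * Dn))"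
    unfolding mob_def using nz by (simp add: field_simps)
  also have "\<dots> = (of_real p * N + of_real q * Dn) / (of_real s * N + of_real t * Dn)"
    using nz by simp
  also have "\<dots> = mob (p * p' + q * s') (p * q' + q * t') (s * p' + t * s') (s * q' + t * t') z"
    unfolding mob_def N_def Dn_def by (simp add: algebra_simps)
  finally show ?thesis unfolding mob_def N_def Dn_def .
qed

lemma div_helper: "(Y::real) > 0 \<Longrightarrow> 1 + X / Y = C \<Longrightarrow> X = Y * C - Y"
proof -
  assume Y: "Y > 0" and h: "1 + X / Y = C"
  hence "X / Y = C - 1" by simp
  hence "X = (C - 1) * Y" using Y by (simp add: divide_eq_eq)
  thus ?thesis by (simp add: algebra_simps)
qed

lemma alg_lemma:
  assumes z: "z \<in> UHP" and d: "d > 0"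
    and h1: "cosh (hdist \<i> z) = cosh s"
    and h2: "cosh (hdist z (\<i> * of_real (exp d))) = cosh (d - s)"
  shows "z = \<i> * of_real (exp s)"
proof -
  define x where "x = Re z"
  define y where "y = Im z"
  define E where "E = exp d"
  define a where "a = exp s"
  have y: "y > 0" using z by (simp add: UHP_iff y_def)
  have E: "E > 1" using d by (simp add: E_def)
  have a: "a > 0" by (simp add: a_def)
  have iU: "\<i> \<in> UHP" by (simp add: UHP_iff)
  have eU: "\<i> * of_real (exp d) \<in> UHP" by (rule iexp_UHP)
  have c1: "(cmod (\<i> - z))^2 = x^2 + (y - 1)^2"
    by (simp add: cmod_power2 x_def y_def power2_commute)
  have c2: "(cmod (z - \<i> * of_real E))^2 = x^2 + (y - E)^2"
    by (simp add: cmod_power2 x_def y_def)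
  have e1: "1 + (x^2 + (y - 1)^2) / (2 * y) = (a + inverse a) / 2"
    using h1 unfolding cosh_hdist[OF iU z] c1 by (simp add: y_def a_def cosh_exp)
  have e2: "1 + (x^2 + (y - E)^2) / (2 * y * E) = (E * inverse a + a * inverse E) / 2"
    using h2 unfolding cosh_hdist[OF z eU] c2[unfolded E_def]
    by (simp add: y_def a_def E_def cosh_exp exp_diff field_simps)
  have g1: "x^2 + (y - 1)^2 = (2 * y) * ((a + inverse a) / 2) - 2 * y"
    using div_helper[OF _ e1] y by simp
  have g2: "x^2 + (y - E)^2 = (2 * y * E) * ((E * inverse a + a * inverse E) / 2) - 2 * y * E"
    using div_helper[OF _ e2] y E by simp
  have iE: "E * inverse E = 1" using E by simp
  have f1: "x^2 + y^2 + 1 = y * (a + inverse a)"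
    using g1 by algebra
  have f2: "x^2 + y^2 + E^2 = y * (E^2 * inverse a + a)"
    using g2 iE by algebra
  have ia: "a * inverse a = 1" using a by simp
  have "(y - a) * (E^2 - 1) = 0"
    using f1 f2 ia by algebra
  moreover have "E^2 - 1 > 0" using E by (simp add: power2_eq_square) (smt (verit) mult_less_cancel_left1)
  ultimately have ya: "y = a" by simp
  have "x^2 = 0" using f1 ya a by (simp add: field_simps power2_eq_square)
  hence "x = 0" by simp
  thus ?thesis using ya by (simp add: complex_eq_iff x_def y_def a_def)
qed



lemma rot_lemma:
  assumes "(c::real) * x + s0 * (1 - E * y) = 0" "c * (y - E) + E * s0 * x = 0"
    "c^2 + s0^2 > 0" "y > 0"
  shows "mob c s0 (-s0) c (Complex x y) = \<i> * of_real E"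
proof -
  have e: "c * c - s0 * (-s0) = c^2 + s0^2" by (simp add: power2_eq_square)
  have det: "c * c - s0 * (-s0) \<noteq> 0" by (subst e) (use assms(3) in linarith)
  have nz: "of_real (-s0) * Complex x y + of_real c \<noteq> 0"
    using mob_den_nz[of "Complex x y" c c s0 "-s0"] det assms(4) by simp
  have "of_real c * Complex x y + of_real s0 = \<i> * of_real E * (of_real (-s0) * Complex x y + of_real c)"
    using assms(1,2) by (simp add: complex_eq_iff algebra_simps)
  thus ?thesis unfolding mob_def using nz by (simp add: divide_eq_eq)
qed

lemma normalize:
  assumes P: "P \<in> UHP" and Q: "Q \<in> UHP"
  shows "\<exists>p q s t. p * t - q * s > 0 \<and> mob p q s t P = \<i> \<and>
           mob p q s t Q = \<i> * of_real (exp (hdist P Q))"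
proof -
  define a where "a = Re P"
  define b where "b = Im P"
  define x where "x = (Re Q - a) / b"
  define y where "y = Im Q / b"
  define E where "E = exp (hdist P Q)"
  have b: "b > 0" using P by (simp add: UHP_iff b_def)
  have y: "y > 0" using Q b by (simp add: UHP_iff y_def)
  have E: "E > 0" by (simp add: E_def)
  have TP: "mob 1 (-a) 0 b P = \<i>"
    using b unfolding mob_def by (simp add: complex_eq_iff a_def b_def)
  have TQ: "mob 1 (-a) 0 b Q = Complex x y"
    using b unfolding mob_def by (simp add: complex_eq_iff a_def x_def y_def Re_divide Im_divide power2_eq_square)
  have "cosh (hdist P Q) = 1 + (cmod (P - Q))^2 / (2 * Im P * Im Q)"
    by (rule cosh_hdist[OF P Q])
  also have "(cmod (P - Q))^2 = b^2 * (x^2 + (y - 1)^2)"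
  proof -
    have "(cmod (P - Q))^2 = (Re Q - a)^2 + (Im Q - b)^2"
      by (simp add: cmod_power2 a_def b_def power2_commute)
    also have "Re Q - a = b * x" using b by (simp add: x_def)
    also have "Im Q - b = b * (y - 1)" using b by (simp add: y_def algebra_simps)
    finally show ?thesis by (simp add: power2_eq_square algebra_simps)
  qed
  also have "2 * Im P * Im Q = b^2 * (2 * y)"
    using b by (simp add: y_def b_def power2_eq_square)
  finally have h0: "1 + (x^2 + (y - 1)^2) / (2 * y) = (E + inverse E) / 2"
    using b by (simp add: E_def cosh_exp)
  have g: "x^2 + (y - 1)^2 = (2 * y) * ((E + inverse E) / 2) - 2 * y"
    using div_helper[OF _ h0] y by simp
  have iE: "E * inverse E = 1" using E by simp
  have key: "E * (x^2 + y^2 + 1) = y * (E^2 + 1)"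
    using g iE by algebra
  obtain c s0 where cs: "c * x + s0 * (1 - E * y) = 0" "c * (y - E) + E * s0 * x = 0" "c^2 + s0^2 > 0"
  proof (cases "y * E - 1 = 0 \<and> x = 0")
    case True
    show ?thesis by (rule that[of 0 1]) (use True in \<open>auto simp: algebra_simps\<close>)
  next
    case False
    have "(y * E - 1)^2 + x^2 > 0" using False by (auto simp: add_pos_nonneg add_nonneg_pos)
    moreover have "(y * E - 1) * (y - E) + E * x * x = 0" using key by algebra
    ultimately show ?thesis by (intro that[of "y * E - 1" x]) (auto simp: algebra_simps)
  qed
  have RI: "mob c s0 (-s0) c \<i> = \<i>"
    using rot_lemma[of c 0 s0 1 1] cs(3) by (simp add: complex_eq_iff Complex_eq)
  have RQ: "mob c s0 (-s0) c (Complex x y) = \<i> * of_real E"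
    by (rule rot_lemma[OF cs y])
  have detT: "1 * b - (-a) * 0 \<noteq> 0" using b by simp
  have PI: "Im P > 0" "Im Q > 0" using P Q by (auto simp: UHP_iff)
  let ?p = "c * 1 + s0 * 0" and ?q = "c * (-a) + s0 * b" and ?s = "-s0 * 1 + c * 0" and ?t = "-s0 * (-a) + c * b"
  have det: "?p * ?t - ?q * ?s > 0"
  proof -
    have "?p * ?t - ?q * ?s = b * (c^2 + s0^2)" by (simp add: algebra_simps power2_eq_square)
    thus ?thesis using b cs(3) by simp
  qed
  show ?thesis
    apply (rule exI[of _ ?p], rule exI[of _ ?q], rule exI[of _ ?s], rule exI[of _ ?t])
    using det mob_comp[OF PI(1) detT, of c s0 "-s0" c, symmetric] mob_comp[OF PI(2) detT, of c s0 "-s0" c, symmetric]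
      TP TQ RI RQ by (simp add: E_def)
qed



lemma geo_UHP: "geodesic_line \<gamma> \<Longrightarrow> \<gamma> t \<in> UHP"
  unfolding geodesic_line_def by auto

lemma geo_dist: "geodesic_line \<gamma> \<Longrightarrow> hdist (\<gamma> s) (\<gamma> t) = \<bar>s - t\<bar>"
  unfolding geodesic_line_def by auto

lemma geo_norm:
  assumes g: "geodesic_line \<gamma>" and det: "p * t - q * s > 0"
    and m0: "mob p q s t (\<gamma> t0) = \<i>" and m1: "mob p q s t (\<gamma> (t0 + 1)) = \<i> * of_real (exp 1)"
  shows "mob p q s t (\<gamma> u) = \<i> * of_real (exp (u - t0))"
proof -
  let ?M = "mob p q s t"
  have U: "\<And>v. \<gamma> v \<in> UHP" using geo_UHP[OF g] .
  have "hdist \<i> (?M (\<gamma> u)) = \<bar>t0 - u\<bar>"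
    using hdist_mob[OF U U det, of t0 u] m0 geo_dist[OF g] by simp
  hence h1: "cosh (hdist \<i> (?M (\<gamma> u))) = cosh (u - t0)"
    by (metis abs_minus_commute cosh_real_abs)
  have "hdist (?M (\<gamma> u)) (\<i> * of_real (exp 1)) = \<bar>u - (t0 + 1)\<bar>"
    using hdist_mob[OF U U det, of u "t0 + 1"] m1 geo_dist[OF g] by simp
  hence h2: "cosh (hdist (?M (\<gamma> u)) (\<i> * of_real (exp 1))) = cosh (1 - (u - t0))"
    by (metis abs_minus_commute cosh_real_abs diff_diff_eq2 diff_diff_eq add.commute)
  show ?thesis
    by (rule alg_lemma[OF mob_UHP[OF U det] _ h1 h2]) simp
qed

lemma hdist_iY:
  assumes w: "w \<in> UHP" and Y: "Y > 0"
  shows "hdist w (\<i> * of_real Y) = arcosh (((cmod w)^2 + Y^2) / (2 * Im w * Y))"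
proof -
  have y: "Im w > 0" using w by (simp add: UHP_iff)
  have "(cmod (w - \<i> * of_real Y))^2 = (Re w)^2 + (Im w - Y)^2" by (simp add: cmod_power2)
  moreover have "(cmod w)^2 = (Re w)^2 + (Im w)^2" by (simp add: cmod_power2)
  ultimately have "1 + (cmod (w - \<i> * of_real Y))^2 / (2 * Im w * Im (\<i> * of_real Y))
      = ((cmod w)^2 + Y^2) / (2 * Im w * Y)"
    using y Y by (simp add: field_simps power2_eq_square)
  thus ?thesis unfolding hdist_def by simp
qed

lemma arcosh_mono: "1 \<le> x \<Longrightarrow> x \<le> y \<Longrightarrow> arcosh x \<le> arcosh (y::real)"
  using arcosh_less_iff_real[of y x] by linarith

lemma hdist_set_norm:
  assumes w: "w \<in> UHP"
  shows "Inf (range (\<lambda>u. hdist w (\<i> * of_real (exp (u - t0))))) = arcosh (cmod w / Im w)"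
proof (rule cInf_eq_minimum)
  have y: "Im w > 0" using w by (simp add: UHP_iff)
  have rho: "cmod w > 0" using y by (auto simp: UHP_iff)
  have "exp (ln (cmod w) + t0 - t0) = cmod w" using rho by simp
  hence "hdist w (\<i> * of_real (exp (ln (cmod w) + t0 - t0))) = arcosh (((cmod w)^2 + (cmod w)^2) / (2 * Im w * cmod w))"
    using hdist_iY[OF w rho] by simp
  also have "\<dots> = arcosh (cmod w / Im w)"
    using rho y by (simp add: field_simps power2_eq_square)
  finally have calc: "hdist w (\<i> * of_real (exp (ln (cmod w) + t0 - t0))) = arcosh (cmod w / Im w)" .
  show "arcosh (cmod w / Im w) \<in> range (\<lambda>u. hdist w (\<i> * of_real (exp (u - t0))))"
    by (rule image_eqI[where x="ln (cmod w) + t0"]) (use calc in simp_all)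
next
  fix z assume "z \<in> range (\<lambda>u. hdist w (\<i> * of_real (exp (u - t0))))"
  then obtain u where z: "z = hdist w (\<i> * of_real (exp (u - t0)))" by auto
  define Y where "Y = exp (u - t0)"
  have Y: "Y > 0" by (simp add: Y_def)
  have y: "Im w > 0" using w by (simp add: UHP_iff)
  have rho: "cmod w \<ge> Im w" by (simp add: abs_Im_le_cmod abs_le_D1)
  have ge1: "1 \<le> cmod w / Im w" using y rho by simp
  have "0 \<le> (cmod w - Y)^2" by simp
  hence "2 * cmod w * Y \<le> (cmod w)^2 + Y^2" by (simp add: power2_eq_square algebra_simps)
  hence "cmod w / Im w \<le> ((cmod w)^2 + Y^2) / (2 * Im w * Y)"
    using y Y by (simp add: field_simps)
  hence "arcosh (cmod w / Im w) \<le> arcosh (((cmod w)^2 + Y^2) / (2 * Im w * Y))"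
    by (rule arcosh_mono[OF ge1])
  thus "arcosh (cmod w / Im w) \<le> z" using hdist_iY[OF w Y] unfolding z Y_def by simp
qed

lemma arcosh_eq_iff:
  assumes "x \<ge> 1" "r > 0"
  shows "arcosh x = r \<longleftrightarrow> x = cosh (r::real)"
proof
  assume "arcosh x = r" thus "x = cosh r" using cosh_arcosh_real[OF assms(1)] by simp
next
  assume "x = cosh r" thus "arcosh x = r" using arcosh_cosh_real assms by simp
qed

lemma perp_norm:
  fixes \<beta> d :: real and \<sigma> :: "real \<Rightarrow> complex"
  assumes \<beta>: "\<beta> > 0" and A: "A \<in> UHP" and d: "d = hdist (\<i> * of_real \<beta>) A" "d > 0"
    and sU: "\<sigma> ` {0..d} \<subseteq> UHP"
    and iso: "\<forall>s\<in>{0..d}. \<forall>t\<in>{0..d}. hdist (\<sigma> s) (\<sigma> t) = \<bar>s - t\<bar>"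
    and s0: "\<sigma> 0 = \<i> * of_real \<beta>" and sd: "\<sigma> d = A"
    and du: "(\<sigma> has_vector_derivative u) (at 0 within {0..d})"
    and perp: "Re (u * cnj (\<i> * of_real \<beta>)) = 0"
  shows "cmod A = \<beta>"
proof -
  define B where "B = \<i> * of_real \<beta>"
  have BU: "B \<in> UHP" using \<beta> by (simp add: B_def UHP_iff)
  obtain p q s t where det: "p * t - q * s > 0" and NB: "mob p q s t B = \<i>"
    and NA: "mob p q s t A = \<i> * of_real (exp d)"
    using normalize[OF BU A] d(1) unfolding B_def by blast
  define D where "D = p * t - q * s"
  have D: "D > 0" using det D_def by simp
  have detinv: "t * p - (-q) * (-s) > 0" using det by (simp add: mult.commute)
  let ?Ni = "mob t (-q) (-s) p"
  have sx: "\<sigma> x = ?Ni (\<i> * of_real (exp x))" if x: "x \<in> {0..d}" for x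
  proof -
    have sxU: "\<sigma> x \<in> UHP" using sU x by auto
    have "cosh (hdist \<i> (mob p q s t (\<sigma> x))) = cosh (hdist B (\<sigma> x))"
      using hdist_mob[OF BU sxU det] NB by simp
    also have "hdist B (\<sigma> x) = \<bar>0 - x\<bar>" using iso x d(2) s0 unfolding B_def by force
    finally have h1: "cosh (hdist \<i> (mob p q s t (\<sigma> x))) = cosh x" by simp
    have "cosh (hdist (mob p q s t (\<sigma> x)) (\<i> * of_real (exp d))) = cosh (hdist (\<sigma> x) A)"
      using hdist_mob[OF sxU A det] NA by simp
    also have "hdist (\<sigma> x) A = \<bar>x - d\<bar>" using iso x d(2) sd by force
    finally have h2: "cosh (hdist (mob p q s t (\<sigma> x)) (\<i> * of_real (exp d))) = cosh (d - x)"
      by (metis abs_minus_commute cosh_real_abs)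
    have "mob p q s t (\<sigma> x) = \<i> * of_real (exp x)"
      by (rule alg_lemma[OF mob_UHP[OF sxU det] d(2) h1 h2])
    hence "?Ni (mob p q s t (\<sigma> x)) = ?Ni (\<i> * of_real (exp x))" by simp
    thus ?thesis using mob_inv[of "\<sigma> x" p t q s] sxU det by (simp add: UHP_iff)
  qed
  define w where "w = of_real (-s) * \<i> + of_real p"
  have iIm: "Im \<i> > 0" by simp
  have detinv': "t * p - (-q) * (-s) \<noteq> 0" using detinv by simp
  have wnz: "w \<noteq> 0" unfolding w_def using mob_den_nz[OF iIm detinv'] .
  have df: "((\<lambda>x. \<i> * of_real (exp x)) has_vector_derivative \<i>) (at 0 within {0..d})"
  proof -
    have "((\<lambda>x. of_real (exp x)) has_vector_derivative (of_real (exp 0) :: complex)) (at 0 within {0..d})"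
      by (intro has_vector_derivative_of_real) (auto intro!: derivative_eq_intros)
    hence "((\<lambda>x. \<i> * of_real (exp x)) has_vector_derivative (\<i> * of_real (exp 0))) (at 0 within {0..d})"
      by (rule has_vector_derivative_mult_right)
    thus ?thesis by simp
  qed
  have dg: "(?Ni has_field_derivative of_real D / w^2) (at ((\<lambda>x. \<i> * of_real (exp x)) 0) within (\<lambda>x. \<i> * of_real (exp x)) ` {0..d})"
  proof -
    have eqD: "t * p - - q * - s = D" unfolding D_def by (simp add: algebra_simps)
    have "(?Ni has_field_derivative of_real D / w^2) (at \<i>)"
      using mob_deriv[OF iIm detinv'] unfolding eqD w_def[symmetric] .
    moreover have "(\<lambda>x. \<i> * of_real (exp x)) 0 = \<i>" by simp
    ultimately show ?thesis by (simp only:) (rule has_field_derivative_at_within)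
  qed
  have dh: "((\<lambda>x. ?Ni (\<i> * of_real (exp x))) has_vector_derivative \<i> * (of_real D / w^2)) (at 0 within {0..d})"
    using field_vector_diff_chain_within[OF df dg] by (simp add: o_def)
  have du': "((\<lambda>x. ?Ni (\<i> * of_real (exp x))) has_vector_derivative u) (at 0 within {0..d})"
    by (rule has_vector_derivative_transform_within[OF du zero_less_one]) (use d(2) sx in auto)
  have u: "u = \<i> * (of_real D / w^2)"
    using vector_derivative_unique_within_closed_interval[of 0 d 0, OF d(2)] du' dh d(2) by auto
  have e1: "u * cnj (\<i> * of_real \<beta>) = of_real (D * \<beta>) * (1 / w^2)"
    unfolding u by (simp add: algebra_simps)
  have e2: "Re (of_real c * z) = c * Re z" for c z by simp
  have "Re (u * cnj (\<i> * of_real \<beta>)) = D * \<beta> * Re (1 / w^2)"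
    unfolding e1 e2 ..
  hence "Re (1 / w^2) = 0" using perp D \<beta> by simp
  moreover have "Re (1 / w^2) = (p^2 - s^2) / ((Re (w^2))^2 + (Im (w^2))^2)"
    by (simp add: Re_divide w_def power2_eq_square algebra_simps)
  moreover have "(Re (w^2))^2 + (Im (w^2))^2 > 0"
  proof -
    have "(Re (w^2))^2 + (Im (w^2))^2 = (cmod (w^2))^2" by (simp only: cmod_power2)
    moreover have "cmod (w^2) > 0" using wnz by simp
    ultimately show ?thesis by simp
  qed
  ultimately have "(p^2 - s^2) / ((Re (w^2))^2 + (Im (w^2))^2) = 0"
    "(Re (w^2))^2 + (Im (w^2))^2 > 0" by simp_all
  hence "p^2 - s^2 = 0" by (metis divide_eq_0_iff less_irrefl)
  hence ps: "p^2 = s^2" by simp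
  have NiI: "?Ni \<i> = B" using mob_inv[of B p t q s] BU det NB by (simp add: UHP_iff)
  have NiA: "?Ni (\<i> * of_real (exp d)) = A" using mob_inv[of A p t q s] A det NA by (simp add: UHP_iff)
  have "of_real t * \<i> + of_real (-q) = B * w"
    using NiI wnz unfolding mob_def w_def by (simp add: divide_eq_eq)
  hence tq: "t = \<beta> * p" "q = \<beta> * (-s)"
    unfolding B_def w_def by (simp_all add: complex_eq_iff algebra_simps)
  define E where "E = exp d"
  define num where "num = of_real t * (\<i> * of_real E) + of_real (-q)"
  define den where "den = of_real (-s) * (\<i> * of_real E) + of_real p"
  have Aeq: "A = num / den" using NiA unfolding mob_def num_def den_def E_def by simp
  have "(cmod num)^2 = \<beta>^2 * (p^2 * E^2 + s^2)"
    unfolding num_def tq cmod_power2 by (simp add: power2_eq_square algebra_simps)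
  also have "\<dots> = \<beta>^2 * (cmod den)^2"
    unfolding den_def cmod_power2 using ps by (simp add: power2_eq_square algebra_simps)
  finally have "cmod num = \<beta> * cmod den"
    using \<beta> by (metis abs_of_nonneg norm_ge_zero power_mult_distrib real_sqrt_abs zero_le_mult_iff less_imp_le)
  moreover have "den \<noteq> 0" using mob_den_nz[of "\<i> * of_real E" t p "-q" "-s"] detinv' unfolding den_def E_def by simp
  ultimately show ?thesis unfolding Aeq by (simp add: norm_divide)
qed



definition Kset :: "real \<Rightarrow> real \<Rightarrow> real \<Rightarrow> complex set" where
  "Kset r \<sigma> \<tau> = {w. Im w > 0 \<and> 0 \<le> \<sigma> * Re w \<and> \<sigma> * Re w \<le> sinh r * Im w \<and>
      min 1 (exp \<tau>) \<le> cmod w \<and> cmod w \<le> max 1 (exp \<tau>)}"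

lemma hsegment_sym: "hsegment x y = hsegment y x"
  unfolding hsegment_def by (auto simp: hdist_sym)

lemma seg_lemma:
  assumes X: "X \<in> UHP" and Y: "Y \<in> UHP" and det: "p * t - q * s > 0"
    and NX: "mob p q s t X = \<i>" and NY: "mob p q s t Y = \<i> * of_real (exp (hdist X Y))"
    and d: "hdist X Y > 0" and z: "z \<in> hsegment X Y"
  shows "\<exists>u\<in>{0..hdist X Y}. mob p q s t z = \<i> * of_real (exp u)"
proof -
  have zU: "z \<in> UHP" and zs: "hdist X z + hdist z Y = hdist X Y" using z by (auto simp: hsegment_def)
  have h1: "cosh (hdist \<i> (mob p q s t z)) = cosh (hdist X z)"
    using hdist_mob[OF X zU det] NX by simp
  have "hdist z Y = hdist X Y - hdist X z" using zs by simp
  hence h2: "cosh (hdist (mob p q s t z) (\<i> * of_real (exp (hdist X Y)))) = cosh (hdist X Y - hdist X z)"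
    using hdist_mob[OF zU Y det] NY by simp
  have "mob p q s t z = \<i> * of_real (exp (hdist X z))"
    by (rule alg_lemma[OF mob_UHP[OF zU det] d h1 h2])
  moreover have "hdist X z \<ge> 0" "hdist z Y \<ge> 0" using hdist_nonneg X Y zU by auto
  ultimately show ?thesis using zs by (intro bexI[of _ "hdist X z"]) auto
qed

lemma mob_id: "mob 1 0 0 1 z = z" by (simp add: mob_def)

lemma iexp0: "\<i> = \<i> * of_real (exp 0)" by simp

lemma seg_axis:
  assumes r: "r > 0" and tau: "\<bar>\<tau>\<bar> = tanh r" and sig: "\<sigma> = 1 \<or> \<sigma> = -1"
  shows "hsegment \<i> (\<i> * of_real (exp \<tau>)) \<subseteq> Kset r \<sigma> \<tau>"
proof
  fix z assume z: "z \<in> hsegment \<i> (\<i> * of_real (exp \<tau>))"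
  have iU: "\<i> \<in> UHP" and eU: "\<i> * of_real (exp \<tau>) \<in> UHP" by (simp_all add: UHP_iff)
  have dd: "hdist \<i> (\<i> * of_real (exp \<tau>)) = \<bar>\<tau>\<bar>"
    using hdist_iexp[of 0 \<tau>] by simp
  have tpos: "\<bar>\<tau>\<bar> > 0" using tau r by simp
  show "z \<in> Kset r \<sigma> \<tau>"
  proof (cases "\<tau> > 0")
    case True
    have "\<exists>u\<in>{0..hdist \<i> (\<i> * of_real (exp \<tau>))}. mob 1 0 0 1 z = \<i> * of_real (exp u)"
      by (rule seg_lemma[OF iU eU _ _ _ _ z]) (use dd tpos True in \<open>simp_all add: mob_id\<close>)
    then obtain u where u: "u \<in> {0..\<tau>}" "z = \<i> * of_real (exp u)" using dd True by (auto simp: mob_id)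
    thus ?thesis using True r unfolding Kset_def by (auto simp: norm_mult)
  next
    case False
    hence tn: "\<tau> < 0" using tpos by simp
    have m1: "mob 0 (-1) 1 0 \<i> = \<i>" by (simp add: mob_def)
    have m2: "mob 0 (-1) 1 0 (\<i> * of_real (exp \<tau>)) = \<i> * of_real (exp (hdist \<i> (\<i> * of_real (exp \<tau>))))"
      using dd tn by (simp add: mob_def exp_minus field_simps)
    have "\<exists>u\<in>{0..hdist \<i> (\<i> * of_real (exp \<tau>))}. mob 0 (-1) 1 0 z = \<i> * of_real (exp u)"
      by (rule seg_lemma[OF iU eU _ m1 m2 _ z]) (use dd tpos in simp_all)
    then obtain u where u: "u \<in> {0..-\<tau>}" "mob 0 (-1) 1 0 z = \<i> * of_real (exp u)" using dd tn by auto
    have zU: "z \<in> UHP" using z by (simp add: hsegment_def)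
    hence "z \<noteq> 0" by (auto simp: UHP_iff)
    hence zz: "z \<noteq> 0" .
    have A: "-1 / z = \<i> * of_real (exp u)" using u(2) by (simp add: mob_def)
    have B: "z * (\<i> * of_real (exp u)) = -1" using zz by (simp flip: A)
    have C: "\<i> * of_real (exp (-u)) * (\<i> * of_real (exp u)) = -1"
      by (simp add: complex_eq_iff exp_minus power2_eq_square)
    have "\<i> * of_real (exp u) \<noteq> 0" by simp
    hence "z = \<i> * of_real (exp (-u))" using B C by (metis mult_right_cancel)
    thus ?thesis using u(1) tn r unfolding Kset_def by (auto simp: norm_mult)
  qed
qed

lemma exp_cosh: "cosh (s::real) = (exp s + inverse (exp s)) / 2"
  by (simp add: cosh_def exp_minus)

lemma exp_sinh: "sinh (s::real) = (exp s - inverse (exp s)) / 2"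
  by (simp add: sinh_def exp_minus)

lemma Q_formula:
  assumes k: "\<kappa> > 0" and sig: "\<sigma> = 1 \<or> \<sigma> = -1"
  shows "mob \<kappa> (-\<sigma> * \<kappa>) \<sigma> 1 (\<i> * of_real (exp s)) = Complex (\<kappa> * \<sigma> * tanh s) (\<kappa> / cosh s)"
proof -
  define E where "E = exp s"
  have E: "E > 0" by (simp add: E_def)
  have ss: "\<sigma> * \<sigma> = 1" using sig by auto
  have iE: "E * inverse E = 1" using E by simp
  have chE: "cosh s = (E * E + 1) / (2 * E)"
    unfolding exp_cosh E_def[symmetric] using E by (simp add: field_simps)
  have shE: "sinh s = (E * E - 1) / (2 * E)"
    unfolding exp_sinh E_def[symmetric] using E by (simp add: field_simps)
  have p1: "E * E + 1 > 0" using E by (simp add: add_pos_pos)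
  have shch: "sinh s * (E * E + 1) = (E * E - 1) * cosh s"
    unfolding shE chE by (simp add: algebra_simps)
  have th: "tanh s = (E * E - 1) / (E * E + 1)"
    unfolding tanh_def by (subst frac_eq_eq) (use shch p1 in auto)
  have ch: "1 / cosh s = 2 * E / (E * E + 1)"
    using E unfolding exp_cosh E_def[symmetric] by (simp add: field_simps)
  have den: "of_real \<sigma> * (\<i> * of_real E) + 1 \<noteq> (0::complex)"
    using E sig by (auto simp: complex_eq_iff)
  have "Complex (\<kappa> * \<sigma> * tanh s) (\<kappa> / cosh s) * (of_real \<sigma> * (\<i> * of_real E) + 1)
        = of_real \<kappa> * (\<i> * of_real E) + of_real (-\<sigma> * \<kappa>)"
  proof -
    have a: "\<kappa> * \<sigma> * tanh s - \<kappa> / cosh s * (\<sigma> * E) = - \<sigma> * \<kappa>"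
    proof -
      have "\<kappa> * \<sigma> * tanh s - \<kappa> / cosh s * (\<sigma> * E) = \<kappa> * \<sigma> * (tanh s - E * (1 / cosh s))" by (simp add: algebra_simps)
      also have "tanh s - E * (1 / cosh s) = -1"
      proof -
        have "tanh s - E * (1 / cosh s) = ((E * E - 1) - E * (2 * E)) / (E * E + 1)"
          unfolding th ch by (simp add: diff_divide_distrib)
        also have "(E * E - 1) - E * (2 * E) = -(E * E + 1)" by algebra
        also have "-(E * E + 1) / (E * E + 1) = -1" using p1 by (metis divide_minus_left divide_self less_irrefl)
        finally show ?thesis .
      qed
      finally show ?thesis by simp
    qed
    have b: "\<kappa> * \<sigma> * tanh s * (\<sigma> * E) + \<kappa> / cosh s = \<kappa> * E"
    proof -
      have "\<kappa> * \<sigma> * tanh s * (\<sigma> * E) + \<kappa> / cosh s = \<kappa> * ((\<sigma> * \<sigma>) * E * tanh s + 1 / cosh s)" by (simp add: algebra_simps)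
      also have "(\<sigma> * \<sigma>) * E * tanh s + 1 / cosh s = E"
      proof -
        have "(\<sigma> * \<sigma>) * E * tanh s + 1 / cosh s = (E * (E * E - 1) + 2 * E) / (E * E + 1)"
          unfolding ss th ch by (simp add: add_divide_distrib)
        also have "E * (E * E - 1) + 2 * E = E * (E * E + 1)" by algebra
        also have "E * (E * E + 1) / (E * E + 1) = E" using p1 by simp
        finally show ?thesis .
      qed
      finally show ?thesis by simp
    qed
    show ?thesis using a b by (simp add: complex_eq_iff algebra_simps)
  qed
  thus ?thesis unfolding mob_def E_def[symmetric] using den by (simp add: divide_eq_eq)
qed



lemma sig_sq: "\<sigma> = 1 \<or> \<sigma> = -1 \<Longrightarrow> \<sigma> * \<sigma> = (1::real)" by auto

lemma seg_perp:
  assumes r: "r > 0" and sig: "\<sigma> = 1 \<or> \<sigma> = -1" and k: "\<kappa> > 0"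
    and klo: "min 1 (exp \<tau>) \<le> \<kappa>" and khi: "\<kappa> \<le> max 1 (exp \<tau>)"
  shows "hsegment (\<i> * of_real \<kappa>) (Complex (\<kappa> * \<sigma> * tanh r) (\<kappa> / cosh r)) \<subseteq> Kset r \<sigma> \<tau>"
proof
  fix z assume z: "z \<in> hsegment (\<i> * of_real \<kappa>) (Complex (\<kappa> * \<sigma> * tanh r) (\<kappa> / cosh r))"
  define A where "A = Complex (\<kappa> * \<sigma> * tanh r) (\<kappa> / cosh r)"
  let ?Q = "mob \<kappa> (-\<sigma> * \<kappa>) \<sigma> 1"
  let ?N = "mob 1 (- (-\<sigma> * \<kappa>)) (-\<sigma>) \<kappa>"
  have ss: "\<sigma> * \<sigma> = 1" using sig by auto
  have det: "\<kappa> * 1 - (-\<sigma> * \<kappa>) * \<sigma> > 0"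
  proof -
    show ?thesis using k sig by auto
  qed
  have detN: "1 * \<kappa> - (- (-\<sigma> * \<kappa>)) * (-\<sigma>) > 0" using det by (simp add: algebra_simps)
  have Qi: "?Q \<i> = \<i> * of_real \<kappa>"
    using Q_formula[OF k sig, of 0] by (simp add: complex_eq_iff)
  have Qr: "?Q (\<i> * of_real (exp r)) = A"
    using Q_formula[OF k sig, of r] by (simp add: A_def)
  have iU: "\<i> \<in> UHP" and erU: "\<i> * of_real (exp r) \<in> UHP" by (simp_all add: UHP_iff)
  have XU: "\<i> * of_real \<kappa> \<in> UHP" using k by (simp add: UHP_iff)
  have AU: "A \<in> UHP" using k by (simp add: UHP_iff A_def)
  have dr: "hdist (\<i> * of_real \<kappa>) A = r"
    using hdist_mob[OF iU erU det] Qi Qr hdist_iexp[of 0 r] r by simp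
  have NX: "?N (\<i> * of_real \<kappa>) = \<i>"
    using mob_inv[of \<i> \<kappa> 1 "-\<sigma> * \<kappa>" \<sigma>] det Qi by simp
  have NA: "?N A = \<i> * of_real (exp (hdist (\<i> * of_real \<kappa>) A))"
    using mob_inv[of "\<i> * of_real (exp r)" \<kappa> 1 "-\<sigma> * \<kappa>" \<sigma>] det Qr dr by simp
  obtain u where u: "u \<in> {0..r}" "?N z = \<i> * of_real (exp u)"
    using seg_lemma[OF XU AU detN NX NA _ z[folded A_def]] dr r by auto
  have zU: "z \<in> UHP" using z by (simp add: hsegment_def)
  have "z = ?Q (?N z)"
    using mob_inv2[of z \<kappa> 1 "-\<sigma> * \<kappa>" \<sigma>] zU det by (simp add: UHP_iff)
  also have "\<dots> = Complex (\<kappa> * \<sigma> * tanh u) (\<kappa> / cosh u)"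
    unfolding u(2) by (rule Q_formula[OF k sig])
  finally have zf: "z = Complex (\<kappa> * \<sigma> * tanh u) (\<kappa> / cosh u)" .
  have u0: "u \<ge> 0" "u \<le> r" using u(1) by auto
  have c1: "0 \<le> \<sigma> * Re z" using zf sig u0 k by (elim disjE) auto
  have "\<sigma> * Re z = \<kappa> * tanh u" using zf sig by (elim disjE) auto
  also have "\<dots> = \<kappa> * sinh u / cosh u" by (simp add: tanh_def)
  also have "\<dots> \<le> sinh r * Im z"
  proof -
    have "\<kappa> * sinh u \<le> sinh r * \<kappa>" using u0 k by (simp add: mult.commute)
    hence "\<kappa> * sinh u / cosh u \<le> sinh r * \<kappa> / cosh u" by (rule divide_right_mono) simp
    thus ?thesis using zf by simp
  qed
  finally have c2: "\<sigma> * Re z \<le> sinh r * Im z" .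
  have "(cmod z)^2 = \<kappa>^2 * ((sinh u)^2 + 1) / (cosh u)^2"
    unfolding zf cmod_power2 using ss by (simp add: tanh_def power_divide field_simps power2_eq_square)
  also have "(sinh u)^2 + 1 = (cosh u)^2" by (simp add: cosh_square_eq)
  finally have "(cmod z)^2 = \<kappa>^2" by simp
  hence c3: "cmod z = \<kappa>" using k by (metis norm_ge_zero power2_eq_imp_eq less_imp_le)
  show "z \<in> Kset r \<sigma> \<tau>"
    unfolding Kset_def using c1 c2 c3 klo khi zU by (simp add: UHP_iff)
qed

lemma ray_point:
  assumes sig: "\<sigma> = 1 \<or> \<sigma> = -1" and w: "Im w > 0" and re: "Re w = \<sigma> * sinh r * Im w" and c: "cmod w = \<kappa>"
  shows "w = Complex (\<kappa> * \<sigma> * tanh r) (\<kappa> / cosh r)"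
proof -
  have ss: "\<sigma> * \<sigma> = 1" using sig by auto
  have "\<kappa>^2 = (Im w)^2 * ((sinh r)^2 + 1)"
    unfolding c[symmetric] cmod_power2 re using ss by (simp add: power2_eq_square algebra_simps)
  also have "(sinh r)^2 + 1 = (cosh r)^2" by (simp add: cosh_square_eq)
  finally have "\<kappa>^2 = (Im w * cosh r)^2" by (simp add: power_mult_distrib)
  moreover have "\<kappa> \<ge> 0" using c by auto
  moreover have "Im w * cosh r > 0" using w by simp
  ultimately have "\<kappa> = Im w * cosh r" by (metis power2_eq_imp_eq less_imp_le)
  hence im: "Im w = \<kappa> / cosh r" by simp
  have "Re w = \<kappa> * \<sigma> * tanh r" unfolding re im tanh_def by (simp add: algebra_simps)
  thus ?thesis using im by (simp add: complex_eq_iff)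
qed

definition Arc :: "real \<Rightarrow> real \<Rightarrow> real \<Rightarrow> complex set" where
  "Arc r \<sigma> \<tau> = (\<lambda>x. of_real x * Complex (\<sigma> * sinh r) 1) ` {min 1 (exp \<tau>) / cosh r .. max 1 (exp \<tau>) / cosh r}"

lemma Arc_connected: "connected (Arc r \<sigma> \<tau>)"
  unfolding Arc_def by (intro connected_continuous_image continuous_intros) simp

lemma Arc_cmod:
  assumes sig: "\<sigma> = 1 \<or> \<sigma> = -1" and x: "x \<ge> 0"
  shows "cmod (of_real x * Complex (\<sigma> * sinh r) 1) = x * cosh r"
proof -
  have ss: "\<sigma> * \<sigma> = 1" using sig by auto
  have cs: "cosh r * cosh r = sinh r * sinh r + 1" using cosh_square_eq[of r] by (simp add: power2_eq_square)
  have "(cmod (Complex (\<sigma> * sinh r) 1))^2 = (cosh r)^2"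
    unfolding cmod_power2 using sig cs by (elim disjE) (simp_all add: power2_eq_square)
  hence "cmod (Complex (\<sigma> * sinh r) 1) = cosh r" by (metis norm_ge_zero cosh_real_nonneg power2_eq_imp_eq)
  thus ?thesis using x by (simp add: norm_mult)
qed

lemma Arc_sub:
  assumes sig: "\<sigma> = 1 \<or> \<sigma> = -1" and r: "r > 0"
  shows "Arc r \<sigma> \<tau> \<subseteq> Kset r \<sigma> \<tau>" "Arc r \<sigma> \<tau> \<subseteq> {w. Im w > 0 \<and> Re w = \<sigma> * sinh r * Im w}"
proof -
  have ss: "\<sigma> * \<sigma> = 1" using sig by auto
  { fix x assume x: "x \<in> {min 1 (exp \<tau>) / cosh r .. max 1 (exp \<tau>) / cosh r}"
    have xp: "x > 0" using x by (auto intro: less_le_trans[rotated])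
    have lo: "min 1 (exp \<tau>) \<le> x * cosh r" and hi: "x * cosh r \<le> max 1 (exp \<tau>)"
      using x by (auto simp: field_simps)
    have cm: "cmod (of_real x * Complex (\<sigma> * sinh r) 1) = x * cosh r"
      using Arc_cmod[OF sig] xp by simp
    have "of_real x * Complex (\<sigma> * sinh r) 1 \<in> Kset r \<sigma> \<tau>"
      unfolding Kset_def using xp lo hi r cm sig by (elim disjE) auto
    moreover have "of_real x * Complex (\<sigma> * sinh r) 1 \<in> {w. Im w > 0 \<and> Re w = \<sigma> * sinh r * Im w}"
      using xp by simp
    ultimately have "of_real x * Complex (\<sigma> * sinh r) 1 \<in> Kset r \<sigma> \<tau> \<inter> {w. Im w > 0 \<and> Re w = \<sigma> * sinh r * Im w}"
      by blast }
  hence "Arc r \<sigma> \<tau> \<subseteq> Kset r \<sigma> \<tau> \<inter> {w. Im w > 0 \<and> Re w = \<sigma> * sinh r * Im w}"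
    unfolding Arc_def by (rule image_subsetI)
  thus "Arc r \<sigma> \<tau> \<subseteq> Kset r \<sigma> \<tau>" "Arc r \<sigma> \<tau> \<subseteq> {w. Im w > 0 \<and> Re w = \<sigma> * sinh r * Im w}"
    by blast+
qed

lemma Arc_mem:
  assumes "min 1 (exp \<tau>) \<le> \<kappa>" "\<kappa> \<le> max 1 (exp \<tau>)"
  shows "Complex (\<kappa> * \<sigma> * tanh r) (\<kappa> / cosh r) \<in> Arc r \<sigma> \<tau>"
  unfolding Arc_def
proof (rule image_eqI[where x="\<kappa> / cosh r"])
  show "Complex (\<kappa> * \<sigma> * tanh r) (\<kappa> / cosh r) = of_real (\<kappa> / cosh r) * Complex (\<sigma> * sinh r) 1"
    by (simp add: complex_eq_iff tanh_def)
  show "\<kappa> / cosh r \<in> {min 1 (exp \<tau>) / cosh r..max 1 (exp \<tau>) / cosh r}"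
    using assms by (simp add: divide_right_mono)
qed



lemma L_decomp:
  "UHP - Kset r \<sigma> \<tau> =
     {w. Im w > 0 \<and> cmod w > max 1 (exp \<tau>)} \<union> {w. Im w > 0 \<and> \<sigma> * Re w < 0} \<union>
     {w. Im w > 0 \<and> \<sigma> * Re w > sinh r * Im w} \<union> {w. Im w > 0 \<and> cmod w < min 1 (exp \<tau>)}"
  unfolding Kset_def UHP_def by auto

lemma L1_conn:
  assumes h: "hi > 0"
  shows "connected {w. Im w > 0 \<and> cmod w > hi}"
proof -
  let ?S = "{w. Im w > 0 \<and> cmod w < 1 / hi}"
  have cS: "convex ?S"
  proof -
    have "?S = {w. Im w > 0} \<inter> ball 0 (1 / hi)" by (auto simp: dist_norm)
    thus ?thesis by (simp add: convex_Int convex_halfspace_Im_gt)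
  qed
  have cont: "continuous_on ?S (\<lambda>w. - 1 / w)"
    by (intro continuous_intros) auto
  have eq: "{w. Im w > 0 \<and> cmod w > hi} = (\<lambda>w. - 1 / w) ` ?S"
  proof
    show "{w. Im w > 0 \<and> cmod w > hi} \<subseteq> (\<lambda>w. - 1 / w) ` ?S"
    proof
      fix z assume z: "z \<in> {w. Im w > 0 \<and> cmod w > hi}"
      hence z0: "z \<noteq> 0" by auto
      have "Im (- 1 / z) > 0" using z z0 by (simp add: Im_divide complex_neq_0 add_pos_pos)
      moreover have "cmod (- 1 / z) < 1 / hi"
      proof -
        have "1 / cmod z < 1 / hi" using z h by (intro divide_strict_left_mono) (auto intro!: mult_pos_pos)
        moreover have "cmod (- 1 / z) = 1 / cmod z" by (simp add: norm_divide)
        ultimately show ?thesis by simp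
      qed
      moreover have "z = - 1 / (- 1 / z)" using z0 by simp
      ultimately show "z \<in> (\<lambda>w. - 1 / w) ` ?S" by blast
    qed
  next
    show "(\<lambda>w. - 1 / w) ` ?S \<subseteq> {w. Im w > 0 \<and> cmod w > hi}"
    proof
      fix z assume "z \<in> (\<lambda>w. - 1 / w) ` ?S"
      then obtain w where w: "Im w > 0" "cmod w < 1 / hi" and zw: "z = - 1 / w" by auto
      hence w0: "w \<noteq> 0" by auto
      have "Im z > 0" using w w0 zw by (simp add: Im_divide complex_neq_0 add_pos_pos)
      moreover have "cmod z > hi"
      proof -
        have "cmod w > 0" using w0 by simp
        hence "hi < 1 / cmod w" using w(2) h by (simp add: field_simps)
        thus ?thesis using zw by (simp add: norm_divide)
      qed
      ultimately show "z \<in> {w. Im w > 0 \<and> cmod w > hi}" by simp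
    qed
  qed
  show ?thesis unfolding eq by (rule connected_continuous_image[OF cont convex_connected[OF cS]])
qed

lemma L_connected:
  assumes r: "r > 0" and sig: "\<sigma> = 1 \<or> \<sigma> = -1"
  shows "connected (UHP - Kset r \<sigma> \<tau>)"
proof -
  define hi where "hi = max 1 (exp \<tau>)"
  define lo where "lo = min 1 (exp \<tau>)"
  have hi: "hi > 0" and lo: "lo > 0" by (auto simp: hi_def lo_def)
  let ?L1 = "{w. Im w > 0 \<and> cmod w > hi}"
  let ?L3 = "{w. Im w > 0 \<and> \<sigma> * Re w < 0}"
  let ?L4 = "{w. Im w > 0 \<and> \<sigma> * Re w > sinh r * Im w}"
  let ?L2 = "{w. Im w > 0 \<and> cmod w < lo}"
  have c1: "connected ?L1" by (rule L1_conn[OF hi])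
  have c3: "connected ?L3"
  proof -
    have "?L3 = {w. Im w > 0} \<inter> {w. inner (complex_of_real \<sigma>) w < 0}"
      by (auto simp: inner_complex_def)
    thus ?thesis by (metis convex_connected convex_Int convex_halfspace_Im_gt convex_halfspace_lt)
  qed
  have c4: "connected ?L4"
  proof -
    have "?L4 = {w. Im w > 0} \<inter> {w. inner (Complex \<sigma> (- sinh r)) w > 0}"
      by (auto simp: inner_complex_def algebra_simps)
    thus ?thesis by (metis convex_connected convex_Int convex_halfspace_Im_gt convex_halfspace_gt)
  qed
  have c2: "connected ?L2"
  proof -
    have "?L2 = {w. Im w > 0} \<inter> ball 0 lo" by (auto simp: dist_norm)
    thus ?thesis by (metis convex_connected convex_Int convex_halfspace_Im_gt convex_ball)
  qed
  define T where "T = hi + 1"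
  have T: "T > hi" "T > 0" using hi by (auto simp: T_def)
  have p13: "Complex (- \<sigma> * T) T \<in> ?L1 \<inter> ?L3"
  proof -
    have "cmod (Complex (- \<sigma> * T) T) \<ge> \<bar>Im (Complex (- \<sigma> * T) T)\<bar>" by (rule abs_Im_le_cmod)
    thus ?thesis using T sig by auto
  qed
  have p14: "Complex (\<sigma> * (sinh r + 1) * T) T \<in> ?L1 \<inter> ?L4"
  proof -
    have "cmod (Complex (\<sigma> * (sinh r + 1) * T) T) \<ge> \<bar>Im (Complex (\<sigma> * (sinh r + 1) * T) T)\<bar>" by (rule abs_Im_le_cmod)
    thus ?thesis using T sig by (auto simp: algebra_simps)
  qed
  have p23: "Complex (- \<sigma> * (lo / 4)) (lo / 4) \<in> ?L2 \<inter> ?L3"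
  proof -
    have "cmod (Complex (- \<sigma> * (lo / 4)) (lo / 4)) \<le> \<bar>- \<sigma> * (lo / 4)\<bar> + \<bar>lo / 4\<bar>"
      using cmod_le[of "Complex (- \<sigma> * (lo / 4)) (lo / 4)"] by simp
    also have "\<dots> = lo / 2" using sig lo by auto
    finally show ?thesis using sig lo by auto
  qed
  have d1: "connected (?L1 \<union> ?L3)" by (rule connected_Un[OF c1 c3]) (use p13 in blast)
  have d2: "connected ((?L1 \<union> ?L3) \<union> ?L4)" by (rule connected_Un[OF d1 c4]) (use p14 in blast)
  have "connected ((?L1 \<union> ?L3 \<union> ?L4) \<union> ?L2)" by (rule connected_Un[OF d2 c2]) (use p23 in blast)
  thus ?thesis unfolding L_decomp hi_def lo_def .
qed

lemma L_unbounded: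
  shows "\<not> hbounded (UHP - Kset r \<sigma> \<tau>)"
proof
  assume "hbounded (UHP - Kset r \<sigma> \<tau>)"
  then obtain c R where c: "c \<in> UHP" and bd: "\<And>z. z \<in> UHP - Kset r \<sigma> \<tau> \<Longrightarrow> hdist c z \<le> R"
    unfolding hbounded_def by blast
  define y where "y = Im c"
  have y: "y > 0" using c by (simp add: y_def UHP_iff)
  define T where "T = max 1 (exp \<tau>) + 2 * y + 8 * y * cosh R + 1"
  have Tp: "T > 0" "T \<ge> 2 * y" "T \<ge> 8 * y * cosh R" "T > max 1 (exp \<tau>)"
  proof -
    have hyc: "y * cosh R > 0" using y by simp
    have m: "max 1 (exp \<tau>) \<ge> 1" "max 1 (exp \<tau>) \<ge> exp \<tau>" by auto
    show "T > 0" "T \<ge> 2 * y" "T \<ge> 8 * y * cosh R" "T > max 1 (exp \<tau>)"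
      using hyc m y unfolding T_def by linarith+
  qed
  have zL: "\<i> * of_real T \<in> UHP - Kset r \<sigma> \<tau>"
    using Tp unfolding Kset_def UHP_def by (auto simp: norm_mult)
  have "(cmod (c - \<i> * of_real T))^2 \<ge> (T - y)^2"
    by (simp add: cmod_power2 y_def power2_commute)
  moreover have "(T - y)^2 \<ge> (T / 2)^2" using Tp y by (intro power_mono) auto
  ultimately have n: "(cmod (c - \<i> * of_real T))^2 \<ge> T^2 / 4" by (simp add: power_divide)
  have "(cmod (c - \<i> * of_real T))^2 / (2 * y * T) \<ge> (T^2 / 4) / (2 * y * T)"
    using n y Tp by (intro divide_right_mono) auto
  moreover have "(T^2 / 4) / (2 * y * T) = T / (8 * y)" using y Tp by (simp add: power2_eq_square field_simps)
  moreover have "T / (8 * y) \<ge> cosh R" using Tp y by (simp add: field_simps)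
  ultimately have big: "1 + (cmod (c - \<i> * of_real T))^2 / (2 * Im c * Im (\<i> * of_real T)) > cosh R"
    by (simp add: y_def)
  have "hdist c (\<i> * of_real T) > arcosh (cosh R)"
    unfolding hdist_def using big cosh_real_ge_1[of R] by (subst arcosh_less_iff_real) auto
  moreover have "arcosh (cosh R) \<ge> R"
    by (metis abs_ge_self arcosh_cosh_real abs_ge_zero cosh_real_abs)
  ultimately have "hdist c (\<i> * of_real T) > R" by simp
  thus False using bd[OF zL] by simp
qed



lemma tanh_le_self:
  assumes "(x::real) \<ge> 0" shows "tanh x \<le> x"
proof -
  have "(\<lambda>t. t - tanh t) 0 \<le> (\<lambda>t. t - tanh t) x"
  proof (rule DERIV_nonneg_imp_nondecreasing[OF assms])
    fix t :: real
    have d: "(tanh has_real_derivative (1 - tanh t ^ 2)) (at t)"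
      using has_field_derivative_tanh[of "\<lambda>x. x" t 1] by (simp add: DERIV_ident)
    have "((\<lambda>t. t - tanh t) has_real_derivative 1 - (1 - tanh t ^ 2)) (at t)"
      by (intro DERIV_diff DERIV_ident d)
    thus "\<exists>y. ((\<lambda>t. t - tanh t) has_real_derivative y) (at t) \<and> 0 \<le> y" by fastforce
  qed
  thus ?thesis by simp
qed

lemma cT_le_C: "r \<ge> 0 \<Longrightarrow> cosh (tanh r) \<le> cosh (r::real)"
  using tanh_le_self[of r] by (simp add: cosh_real_nonneg_le_iff)

lemma cT_le_74: "r \<ge> 0 \<Longrightarrow> cosh (tanh r) \<le> (7/4::real)"
proof -
  assume r: "r \<ge> 0"
  have "tanh r \<le> 1" using tanh_real_lt_1[of r] by simp
  hence "cosh (tanh r) \<le> cosh 1" using r by (simp add: cosh_real_nonneg_le_iff)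
  also have "cosh (1::real) = (exp 1 + inverse (exp 1)) / 2" by (rule cosh_exp)
  also have "\<dots> \<le> (3 + 1/2) / 2"
  proof -
    have "exp (1::real) \<le> 3" by (rule exp_le)
    moreover have "exp (1::real) \<ge> 2" using exp_ge_add_one_self[of 1] by simp
    hence "inverse (exp (1::real)) \<le> inverse 2" by (rule le_imp_inverse_le) simp
    hence "inverse (exp (1::real)) \<le> 1/2" by simp
    ultimately show ?thesis by simp
  qed
  finally show ?thesis by simp
qed

lemma chord:
  fixes p q S C :: real
  assumes S: "S > 0" and SC: "S^2 = C^2 - 1" and C: "C \<ge> 1"
    and p: "0 \<le> p" "p \<le> S" and q: "q \<ge> 0" "q^2 = 1 + p^2"
  shows "q \<le> 1 + p * ((C - 1) / S)"
proof -
  define k where "k = (C - 1) / S"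
  have kS: "k * S = C - 1" using S by (simp add: k_def)
  have k: "k \<ge> 0" using C S by (simp add: k_def)
  have e: "S^2 * ((1 + p * k)^2 - q^2) = 2 * p * (C - 1) * (S - p)"
    using kS SC q(2) by algebra
  have "2 * p * (C - 1) * (S - p) \<ge> 0" using p C by simp
  hence "S^2 * ((1 + p * k)^2 - q^2) \<ge> 0" using e by simp
  hence "(1 + p * k)^2 - q^2 \<ge> 0" using S by (simp add: zero_le_mult_iff)
  hence "q^2 \<le> (1 + p * k)^2" by simp
  moreover have "1 + p * k \<ge> 0" using p k by simp
  ultimately show ?thesis unfolding k_def[symmetric] by (rule power2_le_imp_le)
qed

lemma key_ineq:
  fixes p1 p2 q1 q2 ch r :: real
  assumes r: "r > 0"
    and p1: "0 \<le> p1" "p1 \<le> sinh r" and p2: "0 \<le> p2" "p2 \<le> sinh r"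
    and q1: "q1 \<ge> 0" "q1^2 = 1 + p1^2" and q2: "q2 \<ge> 0" "q2^2 = 1 + p2^2"
    and ch: "ch \<le> cosh (tanh r)"
  shows "ch * q1 * q2 - p1 * p2 \<le> 2 * (cosh r)^2 - 1"
proof -
  define S where "S = sinh r"
  define C where "C = cosh r"
  define cT where "cT = cosh (tanh r)"
  define k where "k = (C - 1) / S"
  have S: "S > 0" using r by (simp add: S_def)
  have C: "C \<ge> 1" by (simp add: C_def cosh_real_ge_1)
  have SC: "S^2 = C^2 - 1" by (simp add: S_def C_def cosh_square_eq)
  have kS: "1 + S * k = C" using S by (simp add: k_def)
  have k: "k \<ge> 0" using C S by (simp add: k_def)
  have cT1: "cT \<ge> 1" by (simp add: cT_def cosh_real_ge_1)
  have cTC: "cT \<le> C" using cT_le_C[of r] r unfolding cT_def C_def by simp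
  have cT74: "cT \<le> 7/4" using cT_le_74[of r] r unfolding cT_def by simp
  have c1: "q1 \<le> 1 + p1 * k" unfolding k_def by (rule chord[OF S SC C]) (use p1 q1 S_def in auto)
  have c2: "q2 \<le> 1 + p2 * k" unfolding k_def by (rule chord[OF S SC C]) (use p2 q2 S_def in auto)
  have q2C: "q2 \<le> C"
  proof -
    have "p2^2 \<le> S^2" using p2 by (intro power_mono) (auto simp: S_def)
    hence qc: "q2^2 \<le> C^2" using q2 SC by simp
    have "0 \<le> C" using C by simp
    thus ?thesis using power2_le_imp_le[OF qc] by blast
  qed
  have "ch * q1 * q2 \<le> cT * q1 * q2"
    using ch q1 q2 by (intro mult_right_mono) (auto simp: cT_def)
  also have "cT * q1 * q2 \<le> cT * (1 + p1 * k) * q2"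
    using c1 cT1 q2 by (intro mult_right_mono mult_left_mono) auto
  finally have s1: "ch * q1 * q2 - p1 * p2 \<le> cT * q2 + p1 * (cT * q2 * k - p2)"
    by (simp add: algebra_simps)
  have final1: "cT * C \<le> 2 * C^2 - 1"
  proof -
    have a: "cT * C \<le> C * C" using cTC C by (intro mult_right_mono) auto
    have b: "1 * 1 \<le> C * C" using C by (intro mult_mono) auto
    show ?thesis using a b unfolding power2_eq_square by linarith
  qed
  have final2: "cT * C^2 - S^2 \<le> 2 * C^2 - 1"
  proof (cases "C \<le> 2")
    case True
    have "cT * C^2 \<le> C * C^2" using cTC by (intro mult_right_mono) auto
    moreover have "C * C^2 \<le> 3 * C^2 - 2"
    proof -
      have "(C - 1) * (C^2 - 2 * C - 2) \<le> 0"
      proof (rule mult_nonneg_nonpos)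
        show "C - 1 \<ge> 0" using C by simp
        have "C^2 - 2 * C - 2 = C * (C - 2) - 2" by (simp add: power2_eq_square algebra_simps)
        moreover have "C * (C - 2) \<le> 0" using C True by (intro mult_nonneg_nonpos) auto
        ultimately show "C^2 - 2 * C - 2 \<le> 0" by simp
      qed
      thus ?thesis by (simp add: power2_eq_square algebra_simps)
    qed
    ultimately show ?thesis using SC by simp
  next
    case False
    have "cT * C^2 \<le> 7/4 * C^2" using cT74 by (intro mult_right_mono) auto
    moreover have "C^2 \<ge> 4"
    proof -
      have "2 * 2 \<le> C * C" using False by (intro mult_mono) auto
      thus ?thesis by (simp add: power2_eq_square)
    qed
    ultimately show ?thesis using SC by simp
  qed
  show ?thesis
  proof (cases "cT * q2 * k - p2 \<le> 0")
    case True
    have "p1 * (cT * q2 * k - p2) \<le> 0" using True p1 by (simp add: mult_nonneg_nonpos)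
    moreover have "cT * q2 \<le> cT * C" using q2C cT1 by simp
    ultimately show ?thesis using s1 final1 by (simp add: C_def)
  next
    case False
    have "p1 * (cT * q2 * k - p2) \<le> S * (cT * q2 * k - p2)"
      using False p1 by (intro mult_right_mono) (auto simp: S_def)
    hence "ch * q1 * q2 - p1 * p2 \<le> cT * q2 * (1 + S * k) - S * p2" using s1 by (simp add: algebra_simps)
    also have "\<dots> = cT * C * q2 - S * p2" using kS by simp
    also have "\<dots> \<le> cT * C * (1 + p2 * k) - S * p2"
      using c2 cT1 C by (simp add: mult_left_mono)
    also have "\<dots> = cT * C + p2 * (cT * C * k - S)" by (simp add: algebra_simps)
    finally have s2: "ch * q1 * q2 - p1 * p2 \<le> cT * C + p2 * (cT * C * k - S)" .
    show ?thesis
    proof (cases "cT * C * k - S \<le> 0")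
      case True
      have "p2 * (cT * C * k - S) \<le> 0" using True p2 by (simp add: mult_nonneg_nonpos)
      thus ?thesis using s2 final1 by (simp add: C_def)
    next
      case False
      have "p2 * (cT * C * k - S) \<le> S * (cT * C * k - S)"
        using False p2 by (intro mult_right_mono) (auto simp: S_def)
      hence "ch * q1 * q2 - p1 * p2 \<le> cT * C * (1 + S * k) - S^2" using s2 by (simp add: algebra_simps power2_eq_square)
      also have "\<dots> = cT * C^2 - S^2" using kS by (simp add: power2_eq_square)
      finally show ?thesis using final2 by (simp add: C_def)
    qed
  qed
qed



lemma ch_bound:
  fixes lo hi E r1 r2 :: real
  assumes lo: "lo > 0" and E: "E \<ge> 1" and hi: "hi = lo * E"
    and r1: "lo \<le> r1" "r1 \<le> hi" and r2: "lo \<le> r2" "r2 \<le> hi"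
  shows "(r1^2 + r2^2) / (2 * r1 * r2) \<le> (E + inverse E) / 2"
proof -
  have p1: "r1 > 0" "r2 > 0" using lo r1 r2 by auto
  have Ep: "E > 0" using E by simp
  have a: "E * r1 - r2 \<ge> 0"
  proof -
    have "E * lo \<le> E * r1" using r1 Ep by simp
    thus ?thesis using hi r2 by (simp add: mult.commute)
  qed
  have b: "r1 - E * r2 \<le> 0"
  proof -
    have "E * lo \<le> E * r2" using r2 Ep by simp
    thus ?thesis using hi r1 by (simp add: mult.commute)
  qed
  have "(E * r1 - r2) * (r1 - E * r2) \<le> 0" using a b by (rule mult_nonneg_nonpos)
  hence main: "E * (r1^2 + r2^2) \<le> (E^2 + 1) * (r1 * r2)"
    by (simp add: power2_eq_square algebra_simps)
  have "(r1^2 + r2^2) / (2 * r1 * r2) = (E * (r1^2 + r2^2)) / (E * (2 * r1 * r2))"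
    using Ep by simp
  also have "\<dots> \<le> ((E^2 + 1) * (r1 * r2)) / (E * (2 * r1 * r2))"
    using main Ep p1 by (intro divide_right_mono) auto
  also have "\<dots> = (E^2 + 1) / (2 * E)" using p1 Ep by (simp add: field_simps)
  also have "\<dots> = (E + inverse E) / 2" using Ep by (simp add: field_simps power2_eq_square)
  finally show ?thesis .
qed

lemma cosh_identity:
  fixes x1 y1 x2 y2 r1 r2 \<sigma> :: real
  assumes y: "y1 > 0" "y2 > 0" and r: "r1 > 0" "r2 > 0"
    and rr: "r1^2 = x1^2 + y1^2" "r2^2 = x2^2 + y2^2" and ss: "\<sigma> * \<sigma> = 1"
  shows "1 + ((x1 - x2)^2 + (y1 - y2)^2) / (2 * y1 * y2)
     = ((r1^2 + r2^2) / (2 * r1 * r2)) * (r1 / y1) * (r2 / y2) - (\<sigma> * x1 / y1) * (\<sigma> * x2 / y2)"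
proof -
  have s1: "((r1^2 + r2^2) / (2 * r1 * r2)) * (r1 / y1) * (r2 / y2) = (r1^2 + r2^2) / (2 * y1 * y2)"
    using r y by (simp add: field_simps)
  have s2: "(\<sigma> * x1 / y1) * (\<sigma> * x2 / y2) = (\<sigma> * \<sigma>) * (x1 * x2) / (y1 * y2)"
    by (simp add: algebra_simps)
  have s3: "1 + ((x1 - x2)^2 + (y1 - y2)^2) / (2 * y1 * y2) = (x1^2 + y1^2 + (x2^2 + y2^2)) / (2 * y1 * y2) - (x1 * x2) / (y1 * y2)"
    using y by (simp add: field_simps power2_eq_square)
  show ?thesis unfolding s1 s2 s3 ss rr using r y by simp
qed

lemma diam_K:
  assumes r: "r > 0" and sig: "\<sigma> = 1 \<or> \<sigma> = -1" and tau: "\<bar>\<tau>\<bar> = tanh r"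
    and z: "z \<in> Kset r \<sigma> \<tau>" and w: "w \<in> Kset r \<sigma> \<tau>"
  shows "hdist z w \<le> 2 * r"
proof -
  define lo where "lo = min 1 (exp \<tau>)"
  define hi where "hi = max 1 (exp \<tau>)"
  define E where "E = exp (tanh r)"
  have lo: "lo > 0" by (simp add: lo_def)
  have E: "E \<ge> 1" using r by (simp add: E_def)
  have hi: "hi = lo * E"
  proof (cases "\<tau> \<ge> 0")
    case True thus ?thesis using tau by (simp add: lo_def hi_def E_def)
  next
    case False
    hence "tanh r = - \<tau>" using tau by simp
    thus ?thesis using False by (simp add: lo_def hi_def E_def exp_minus)
  qed
  have ss: "\<sigma> * \<sigma> = 1" using sig by auto
  have zz: "Im z > 0" "0 \<le> \<sigma> * Re z" "\<sigma> * Re z \<le> sinh r * Im z" "lo \<le> cmod z" "cmod z \<le> hi"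
    using z unfolding Kset_def lo_def hi_def by auto
  have ww: "Im w > 0" "0 \<le> \<sigma> * Re w" "\<sigma> * Re w \<le> sinh r * Im w" "lo \<le> cmod w" "cmod w \<le> hi"
    using w unfolding Kset_def lo_def hi_def by auto
  have zU: "z \<in> UHP" and wU: "w \<in> UHP" using zz ww by (auto simp: UHP_iff)
  have rz: "cmod z > 0" "cmod w > 0" using zz ww lo by auto
  define p1 where "p1 = \<sigma> * Re z / Im z"
  define p2 where "p2 = \<sigma> * Re w / Im w"
  define q1 where "q1 = cmod z / Im z"
  define q2 where "q2 = cmod w / Im w"
  have P1: "0 \<le> p1" "p1 \<le> sinh r" using zz by (simp_all add: p1_def divide_le_eq)
  have P2: "0 \<le> p2" "p2 \<le> sinh r" using ww by (simp_all add: p2_def divide_le_eq)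
  have Q1: "q1 \<ge> 0" "q1^2 = 1 + p1^2"
  proof -
    show "q1 \<ge> 0" using zz by (simp add: q1_def)
    have "q1^2 = ((Re z)^2 + (Im z)^2) / (Im z)^2" by (simp add: q1_def power_divide cmod_power2)
    also have "\<dots> = 1 + (\<sigma> * \<sigma>) * (Re z)^2 / (Im z)^2" using zz ss by (simp add: field_simps)
    also have "\<dots> = 1 + p1^2" by (simp add: p1_def power_divide power2_eq_square algebra_simps)
    finally show "q1^2 = 1 + p1^2" .
  qed
  have Q2: "q2 \<ge> 0" "q2^2 = 1 + p2^2"
  proof -
    show "q2 \<ge> 0" using ww by (simp add: q2_def)
    have "q2^2 = ((Re w)^2 + (Im w)^2) / (Im w)^2" by (simp add: q2_def power_divide cmod_power2)
    also have "\<dots> = 1 + (\<sigma> * \<sigma>) * (Re w)^2 / (Im w)^2" using ww ss by (simp add: field_simps)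
    also have "\<dots> = 1 + p2^2" by (simp add: p2_def power_divide power2_eq_square algebra_simps)
    finally show "q2^2 = 1 + p2^2" .
  qed
  define ch where "ch = ((cmod z)^2 + (cmod w)^2) / (2 * cmod z * cmod w)"
  have ch: "ch \<le> cosh (tanh r)"
    unfolding ch_def cosh_exp E_def[symmetric] by (rule ch_bound[OF lo E hi zz(4,5) ww(4,5)])
  have "cosh (hdist z w) = 1 + (cmod (z - w))^2 / (2 * Im z * Im w)" by (rule cosh_hdist[OF zU wU])
  also have "(cmod (z - w))^2 = (Re z - Re w)^2 + (Im z - Im w)^2" by (simp add: cmod_power2)
  also have "1 + ((Re z - Re w)^2 + (Im z - Im w)^2) / (2 * Im z * Im w) = ch * q1 * q2 - p1 * p2"
    unfolding ch_def q1_def q2_def p1_def p2_def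
    by (rule cosh_identity[OF zz(1) ww(1) rz]) (simp_all add: cmod_power2 ss)
  also have "\<dots> \<le> 2 * (cosh r)^2 - 1" by (rule key_ineq[OF r P1 P2 Q1 Q2 ch])
  also have "\<dots> = cosh (2 * r)" by (simp add: cosh_double_cosh)
  finally show ?thesis using r by (intro hdist_le_from_cosh[OF zU wU]) auto
qed



lemma hseg_mob:
  assumes det: "p * t - q * s > 0" and x: "x \<in> UHP" and y: "y \<in> UHP" and z: "z \<in> hsegment x y"
  shows "mob p q s t z \<in> hsegment (mob p q s t x) (mob p q s t y)"
proof -
  have zU: "z \<in> UHP" and e: "hdist x z + hdist z y = hdist x y" using z by (auto simp: hsegment_def)
  show ?thesis unfolding hsegment_def
    using mob_UHP[OF zU det] e hdist_mob[OF x zU det] hdist_mob[OF zU y det] hdist_mob[OF x y det] by simp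
qed

lemma perp_transport:
  assumes g: "geodesic_line \<gamma>" and det: "p * t - q * s > 0"
    and Mg: "\<And>u. mob p q s t (\<gamma> u) = \<i> * of_real (exp (u - tb))"
    and perp: "perp_segment B A \<gamma>" and A: "A \<in> UHP"
  shows "cmod (mob p q s t A) = cmod (mob p q s t B)"
proof -
  let ?M = "mob p q s t"
  obtain sg t0 u v where d: "hdist B A > 0" and sU: "sg ` {0..hdist B A} \<subseteq> UHP"
    and iso: "\<forall>s\<in>{0..hdist B A}. \<forall>t\<in>{0..hdist B A}. hdist (sg s) (sg t) = \<bar>s - t\<bar>"
    and s0: "sg 0 = B" and sd: "sg (hdist B A) = A" and gt0: "\<gamma> t0 = B"
    and du: "(sg has_vector_derivative u) (at 0 within {0..hdist B A})"
    and dv: "(\<gamma> has_vector_derivative v) (at t0)"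
    and pp: "Re (u * cnj v) = 0"
    using perp unfolding perp_segment_def by blast
  define \<beta> where "\<beta> = exp (t0 - tb)"
  have \<beta>: "\<beta> > 0" by (simp add: \<beta>_def)
  have BU: "B \<in> UHP" using gt0 geo_UHP[OF g] by auto
  have MB: "?M B = \<i> * of_real \<beta>" using Mg[of t0] gt0 by (simp add: \<beta>_def)
  define d where "d = hdist B A"
  have dd: "d = hdist (\<i> * of_real \<beta>) (?M A)" using hdist_mob[OF BU A det] MB by (simp add: d_def)
  have detne: "p * t - q * s \<noteq> 0" using det by simp
  define D where "D = of_real (p * t - q * s) / (of_real s * B + of_real t) ^ 2"
  have BI: "Im B > 0" using BU by (simp add: UHP_iff)
  have dM: "(?M has_field_derivative D) (at B)" unfolding D_def by (rule mob_deriv[OF BI detne])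
  have du': "((?M \<circ> sg) has_vector_derivative u * D) (at 0 within {0..d})"
    using field_vector_diff_chain_within[OF du[folded d_def], of ?M D] dM s0
    by (simp add: has_field_derivative_at_within)
  have dv': "((?M \<circ> \<gamma>) has_vector_derivative v * D) (at t0)"
    using field_vector_diff_chain_within[OF dv, of ?M D] dM gt0
    by (simp add: has_field_derivative_at_within)
  have "((\<lambda>x. \<i> * of_real (exp (x - tb))) has_vector_derivative \<i> * of_real (exp (t0 - tb))) (at t0)"
  proof -
    have "((\<lambda>x. of_real (exp (x - tb))) has_vector_derivative (of_real (exp (t0 - tb) * 1) :: complex)) (at t0)"
      by (intro has_vector_derivative_of_real) (auto intro!: derivative_eq_intros)
    hence "((\<lambda>x. \<i> * of_real (exp (x - tb))) has_vector_derivative \<i> * (of_real (exp (t0 - tb) * 1))) (at t0)"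
      by (rule has_vector_derivative_mult_right)
    thus ?thesis by simp
  qed
  moreover have "?M \<circ> \<gamma> = (\<lambda>x. \<i> * of_real (exp (x - tb)))" using Mg by (simp add: o_def)
  ultimately have vD: "v * D = \<i> * of_real \<beta>"
    using dv' vector_derivative_unique_at unfolding \<beta>_def by metis
  have "Re (u * D * cnj (\<i> * of_real \<beta>)) = Re (u * cnj v * of_real ((cmod D)^2))"
  proof -
    have "u * D * cnj (v * D) = u * cnj v * (D * cnj D)" by (simp add: algebra_simps)
    thus ?thesis unfolding vD[symmetric] complex_norm_square by (simp only:)
  qed
  also have "\<dots> = Re (u * cnj v) * (cmod D)^2" by simp
  finally have perp': "Re (u * D * cnj (\<i> * of_real \<beta>)) = 0" using pp by simp
  have "cmod (?M A) = \<beta>"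
  proof (rule perp_norm[OF \<beta> mob_UHP[OF A det] dd])
    show "d > 0" using d d_def by simp
    show "(?M \<circ> sg) ` {0..d} \<subseteq> UHP" using sU mob_UHP[OF _ det] unfolding d_def by auto
    show "\<forall>s\<in>{0..d}. \<forall>t\<in>{0..d}. hdist ((?M \<circ> sg) s) ((?M \<circ> sg) t) = \<bar>s - t\<bar>"
    proof (intro ballI)
      fix s' t' assume s': "s' \<in> {0..d}" and t': "t' \<in> {0..d}"
      have U: "sg s' \<in> UHP" "sg t' \<in> UHP" using sU s' t' unfolding d_def by auto
      show "hdist ((?M \<circ> sg) s') ((?M \<circ> sg) t') = \<bar>s' - t'\<bar>"
        using hdist_mob[OF U det] iso s' t' unfolding d_def by simp
    qed
    show "(?M \<circ> sg) 0 = \<i> * of_real \<beta>" using s0 MB by simp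
    show "(?M \<circ> sg) d = ?M A" using sd by (simp add: d_def)
    show "((?M \<circ> sg) has_vector_derivative u * D) (at 0 within {0..d})" by (rule du')
    show "Re (u * D * cnj (\<i> * of_real \<beta>)) = 0" by (rule perp')
  qed
  thus ?thesis using MB \<beta> by (simp add: norm_mult)
qed



theorem lemma8:
  fixes r :: real and \<gamma> :: "real \<Rightarrow> complex" and H :: "complex set"
    and a a' b b' :: complex
  assumes "r > 0"
    and "geodesic_line \<gamma>"
    and "hypercycle \<gamma> r H"
    and "b \<in> range \<gamma>" and "b' \<in> range \<gamma>"
    and "hdist b b' = tanh r"
    and "a \<in> H" and "a' \<in> H"
    and "perp_segment b a \<gamma>" and "perp_segment b' a' \<gamma>"
  shows "\<forall>x\<in>hbox a b b' a' H. \<forall>y\<in>hbox a b b' a' H. hdist x y \<le> 2 * r"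
proof -
  note r = assms(1) and g = assms(2)
  obtain tb where tb: "b = \<gamma> tb" using assms(4) by auto
  obtain tb' where tb': "b' = \<gamma> tb'" using assms(5) by auto
  have PU: "\<gamma> tb \<in> UHP" "\<gamma> (tb + 1) \<in> UHP" using geo_UHP[OF g] by auto
  have d1: "hdist (\<gamma> tb) (\<gamma> (tb + 1)) = 1" using geo_dist[OF g] by simp
  obtain p q s t where det: "p * t - q * s > 0" and MP: "mob p q s t (\<gamma> tb) = \<i>"
    and MQ: "mob p q s t (\<gamma> (tb + 1)) = \<i> * of_real (exp 1)"
    using normalize[OF PU] d1 by auto
  define M where "M = mob p q s t"
  define Mi where "Mi = mob t (-q) (-s) p"
  have detI: "t * p - (-q) * (-s) > 0" using det by (simp add: mult.commute)
  have MU: "\<And>z. z \<in> UHP \<Longrightarrow> M z \<in> UHP" unfolding M_def using mob_UHP[OF _ det] .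
  have MiU: "\<And>z. z \<in> UHP \<Longrightarrow> Mi z \<in> UHP" unfolding Mi_def using mob_UHP[OF _ detI] .
  have MiM: "\<And>z. z \<in> UHP \<Longrightarrow> Mi (M z) = z"
    unfolding M_def Mi_def using mob_inv det by (simp add: UHP_iff)
  have MMi: "\<And>z. z \<in> UHP \<Longrightarrow> M (Mi z) = z"
    unfolding M_def Mi_def using mob_inv2 det by (simp add: UHP_iff)
  have Mdist: "\<And>z w. z \<in> UHP \<Longrightarrow> w \<in> UHP \<Longrightarrow> hdist (M z) (M w) = hdist z w"
    unfolding M_def using hdist_mob[OF _ _ det] .
  have Mcont: "continuous_on UHP M" unfolding M_def using mob_cont det by simp
  have Micont: "continuous_on UHP Mi" unfolding Mi_def using mob_cont detI by simp
  have Mg: "\<And>u. M (\<gamma> u) = \<i> * of_real (exp (u - tb))"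
    unfolding M_def by (rule geo_norm[OF g det MP MQ])
  define \<tau> where "\<tau> = tb' - tb"
  have tau: "\<bar>\<tau>\<bar> = tanh r" using assms(6) geo_dist[OF g, of tb tb'] tb tb' by (simp add: \<tau>_def abs_minus_commute)
  have Mb: "M b = \<i>" using Mg[of tb] tb by simp
  have Mb': "M b' = \<i> * of_real (exp \<tau>)" using Mg[of tb'] tb' by (simp add: \<tau>_def)
  have bU: "b \<in> UHP" "b' \<in> UHP" using tb tb' geo_UHP[OF g] by auto

  define Eo where "Eo = {z \<in> UHP. hdist_set z (range \<gamma>) = r}"
  have HC: "H \<in> components Eo" using assms(3) unfolding hypercycle_def Eo_def .
  have HE: "H \<subseteq> Eo" using HC by (rule in_components_subset)
  have EoU: "Eo \<subseteq> UHP" unfolding Eo_def by auto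
  have Eo_iff: "z \<in> Eo \<longleftrightarrow> cmod (M z) = cosh r * Im (M z)" if zU: "z \<in> UHP" for z
  proof -
    have "hdist_set z (range \<gamma>) = Inf (range (\<lambda>u. hdist (M z) (\<i> * of_real (exp (u - tb)))))"
      unfolding hdist_set_def image_image
      by (rule arg_cong[where f=Inf], rule image_cong) (use Mdist[OF zU geo_UHP[OF g]] Mg in auto)
    also have "\<dots> = arcosh (cmod (M z) / Im (M z))" by (rule hdist_set_norm[OF MU[OF zU]])
    finally have hs: "hdist_set z (range \<gamma>) = arcosh (cmod (M z) / Im (M z))" .
    have y: "Im (M z) > 0" using MU[OF zU] by (simp add: UHP_iff)
    have ge1: "cmod (M z) / Im (M z) \<ge> 1" using y abs_Im_le_cmod[of "M z"] by simp
    have "z \<in> Eo \<longleftrightarrow> cmod (M z) / Im (M z) = cosh r"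
      unfolding Eo_def using zU hs arcosh_eq_iff[OF ge1 r] by simp
    also have "\<dots> \<longleftrightarrow> cmod (M z) = cosh r * Im (M z)" using y by (simp add: field_simps)
    finally show ?thesis .
  qed
  have aU: "a \<in> UHP" "a' \<in> UHP" using assms(7,8) HE EoU by auto
  have En_re: "Re w \<noteq> 0 \<and> (Re w)^2 = (sinh r * Im w)^2" if "Im w > 0" "cmod w = cosh r * Im w" for w
  proof -
    have "(Re w)^2 + (Im w)^2 = (cosh r)^2 * (Im w)^2"
      using that(2) by (metis cmod_power2 power_mult_distrib)
    hence e: "(Re w)^2 = (sinh r * Im w)^2" by (simp add: cosh_square_eq power_mult_distrib algebra_simps)
    moreover have "sinh r * Im w > 0" using r that(1) by simp
    ultimately show ?thesis by auto
  qed
  define \<sigma> where "\<sigma> = (if Re (M a) > 0 then 1 else (-1::real))"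
  have sig: "\<sigma> = 1 \<or> \<sigma> = -1" by (simp add: \<sigma>_def)
  have ray: "Im (M h) > 0 \<and> Re (M h) = \<sigma> * sinh r * Im (M h)" if hH: "h \<in> H" for h
  proof -
    have conn: "connected (M ` H)"
      using HC in_components_connected continuous_on_subset[OF Mcont] HE EoU
      by (metis connected_continuous_image order_trans)
    have sub: "M ` H \<subseteq> {w. Re w > 0} \<union> {w. Re w < 0}"
    proof
      fix w assume "w \<in> M ` H"
      then obtain z where z: "z \<in> H" "w = M z" by auto
      have zU: "z \<in> UHP" using z HE EoU by auto
      have "Im w > 0" "cmod w = cosh r * Im w" using Eo_iff[OF zU] z HE MU[OF zU] by (auto simp: UHP_iff)
      thus "w \<in> {w. Re w > 0} \<union> {w. Re w < 0}" using En_re by fastforce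
    qed
    have one: "{w. Re w > 0} \<inter> M ` H = {} \<or> {w. Re w < 0} \<inter> M ` H = {}"
      by (rule connectedD[OF conn open_halfspace_Re_gt open_halfspace_Re_lt]) (use sub in auto)
    have hU: "h \<in> UHP" using hH HE EoU by auto
    have y: "Im (M h) > 0" and c: "cmod (M h) = cosh r * Im (M h)"
      using Eo_iff[OF hU] hH HE MU[OF hU] by (auto simp: UHP_iff)
    have ya: "Im (M a) > 0" and ca: "cmod (M a) = cosh r * Im (M a)"
      using Eo_iff[OF aU(1)] assms(7) HE MU[OF aU(1)] by (auto simp: UHP_iff)
    have eh: "Re (M h) \<noteq> 0" "(Re (M h))^2 = (sinh r * Im (M h))^2" using En_re[OF y c] by auto
    have ea: "Re (M a) \<noteq> 0" using En_re[OF ya ca] by auto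
    have Sp: "sinh r * Im (M h) > 0" using r y by simp
    have mh: "M h \<in> M ` H" "M a \<in> M ` H" using hH assms(7) by auto
    have "(\<not> Re (M h) > 0 \<and> \<not> Re (M a) > 0) \<or> (\<not> Re (M h) < 0 \<and> \<not> Re (M a) < 0)"
      using one mh by blast
    hence same: "(Re (M h) > 0) = (Re (M a) > 0)"
      using eh(1) ea by linarith
    have "Re (M h) = sinh r * Im (M h) \<or> Re (M h) = - (sinh r * Im (M h))"
      using eh(2) by (simp add: power2_eq_iff)
    hence "Re (M h) = \<sigma> * sinh r * Im (M h)"
      using same Sp unfolding \<sigma>_def by auto
    thus ?thesis using y by simp
  qed

  have ca: "cmod (M a) = 1"
    using perp_transport[OF g det Mg[unfolded M_def] assms(9) aU(1)] Mb unfolding M_def by simp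
  have ca': "cmod (M a') = exp \<tau>"
    using perp_transport[OF g det Mg[unfolded M_def] assms(10) aU(2)] Mb' unfolding M_def by (simp add: norm_mult)
  have Ma: "M a = Complex (1 * \<sigma> * tanh r) (1 / cosh r)"
    using ray_point[OF sig _ _ ca] ray[OF assms(7)] by blast
  have Ma': "M a' = Complex (exp \<tau> * \<sigma> * tanh r) (exp \<tau> / cosh r)"
    using ray_point[OF sig _ _ ca'] ray[OF assms(8)] by blast

  define K where "K = Kset r \<sigma> \<tau>"
  define Ko where "Ko = {z \<in> UHP. M z \<in> K}"
  have k1: "min 1 (exp \<tau>) \<le> 1" "1 \<le> max 1 (exp \<tau>)" by auto
  have k2: "min 1 (exp \<tau>) \<le> exp \<tau>" "exp \<tau> \<le> max 1 (exp \<tau>)" by auto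
  define J where "J = hsegment a b \<union> hsegment b b' \<union> hsegment b' a' \<union> curve_arc H a' a"
  have J1: "hsegment a b \<subseteq> Ko"
  proof
    fix z assume z: "z \<in> hsegment a b"
    have zU: "z \<in> UHP" using z by (simp add: hsegment_def)
    have "M z \<in> hsegment (M a) (M b)" unfolding M_def by (rule hseg_mob[OF det aU(1) bU(1) z])
    hence "M z \<in> hsegment (\<i> * of_real 1) (Complex (1 * \<sigma> * tanh r) (1 / cosh r))"
      using Ma Mb hsegment_sym by simp
    hence "M z \<in> K" unfolding K_def using seg_perp[OF r sig zero_less_one k1] by blast
    thus "z \<in> Ko" using zU by (simp add: Ko_def)
  qed
  have J2: "hsegment b b' \<subseteq> Ko"
  proof
    fix z assume z: "z \<in> hsegment b b'"
    have zU: "z \<in> UHP" using z by (simp add: hsegment_def)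
    have "M z \<in> hsegment (M b) (M b')" unfolding M_def by (rule hseg_mob[OF det bU z])
    hence "M z \<in> K" unfolding K_def using seg_axis[OF r tau sig] Mb Mb' by auto
    thus "z \<in> Ko" using zU by (simp add: Ko_def)
  qed
  have J3: "hsegment b' a' \<subseteq> Ko"
  proof
    fix z assume z: "z \<in> hsegment b' a'"
    have zU: "z \<in> UHP" using z by (simp add: hsegment_def)
    have "M z \<in> hsegment (M b') (M a')" unfolding M_def by (rule hseg_mob[OF det bU(2) aU(2) z])
    hence "M z \<in> hsegment (\<i> * of_real (exp \<tau>)) (Complex (exp \<tau> * \<sigma> * tanh r) (exp \<tau> / cosh r))"
      using Ma' Mb' by simp
    hence "M z \<in> K" unfolding K_def using seg_perp[OF r sig exp_gt_zero k2] by blast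
    thus "z \<in> Ko" using zU by (simp add: Ko_def)
  qed
  have J4: "curve_arc H a' a \<subseteq> Ko"
  proof -
    define X where "X = Mi ` Arc r \<sigma> \<tau>"
    have ArcU: "Arc r \<sigma> \<tau> \<subseteq> UHP" using Arc_sub(2)[OF sig r, of \<tau>] by (auto simp: UHP_iff)
    have Xc: "connected X" unfolding X_def
      by (rule connected_continuous_image[OF continuous_on_subset[OF Micont ArcU] Arc_connected])
    have XE: "X \<subseteq> Eo"
    proof
      fix z assume "z \<in> X"
      then obtain w where w: "w \<in> Arc r \<sigma> \<tau>" "z = Mi w" unfolding X_def by auto
      have wU: "w \<in> UHP" using w ArcU by auto
      have wr: "Im w > 0" "Re w = \<sigma> * sinh r * Im w" using Arc_sub(2)[OF sig r, of \<tau>] w by auto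
      have cs: "cosh r * cosh r = sinh r * sinh r + 1" using cosh_square_eq[of r] by (simp add: power2_eq_square)
      have "(cmod w)^2 = (cosh r * Im w)^2"
        unfolding cmod_power2 wr(2) using sig
        by (elim disjE) (simp_all add: power2_eq_square cs algebra_simps)
      hence "cmod w = cosh r * Im w" using wr(1) by (metis norm_ge_zero power2_eq_imp_eq cosh_real_pos mult_pos_pos less_imp_le)
      thus "z \<in> Eo" using Eo_iff[OF MiU[OF wU]] w MMi[OF wU] MiU[OF wU] by simp
    qed
    have aX: "a \<in> X" "a' \<in> X"
    proof -
      have "M a \<in> Arc r \<sigma> \<tau>" using Ma Arc_mem[OF k1] by simp
      thus "a \<in> X" unfolding X_def using MiM[OF aU(1)] by (metis image_eqI)
      have "M a' \<in> Arc r \<sigma> \<tau>" using Ma' Arc_mem[OF k2] by simp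
      thus "a' \<in> X" unfolding X_def using MiM[OF aU(2)] by (metis image_eqI)
    qed
    have XH: "X \<subseteq> H" by (rule components_maximal[OF HC Xc XE]) (use aX assms(7) in auto)
    have "curve_arc H a' a \<subseteq> X" unfolding curve_arc_def using XH Xc aX by blast
    moreover have "X \<subseteq> Ko"
    proof
      fix z assume "z \<in> X"
      then obtain w where w: "w \<in> Arc r \<sigma> \<tau>" "z = Mi w" unfolding X_def by auto
      have wU: "w \<in> UHP" using w ArcU by auto
      show "z \<in> Ko" unfolding Ko_def K_def using w MMi[OF wU] MiU[OF wU] Arc_sub(1)[OF sig r, of \<tau>] by auto
    qed
    ultimately show ?thesis by blast
  qed
  have JK: "J \<subseteq> Ko" unfolding J_def using J1 J2 J3 J4 by blast

  have Lo: "UHP - Ko = Mi ` (UHP - K)"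
  proof
    show "UHP - Ko \<subseteq> Mi ` (UHP - K)"
    proof
      fix z assume z: "z \<in> UHP - Ko"
      hence "M z \<in> UHP - K" "z = Mi (M z)" using MU MiM by (auto simp: Ko_def)
      thus "z \<in> Mi ` (UHP - K)" by blast
    qed
    show "Mi ` (UHP - K) \<subseteq> UHP - Ko" using MiU MMi by (auto simp: Ko_def)
  qed
  have Lconn: "connected (UHP - Ko)" unfolding Lo K_def
    by (rule connected_continuous_image[OF continuous_on_subset[OF Micont] L_connected[OF r sig]]) auto
  have Lunb: "\<not> hbounded (UHP - Ko)"
  proof
    assume "hbounded (UHP - Ko)"
    then obtain c R where c: "c \<in> UHP" and bd: "\<And>z. z \<in> UHP - Ko \<Longrightarrow> hdist c z \<le> R"
      unfolding hbounded_def by blast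
    have "hbounded (UHP - K)" unfolding hbounded_def
    proof (intro bexI exI ballI)
      fix w assume w: "w \<in> UHP - K"
      have "Mi w \<in> UHP - Ko" using Lo w by blast
      hence "hdist c (Mi w) \<le> R" by (rule bd)
      thus "hdist (M c) w \<le> R" using Mdist[OF c MiU[of w]] MMi[of w] w by simp
    qed (rule MU[OF c])
    thus False using L_unbounded unfolding K_def by blast
  qed
  have regK: "region_bounded_by J \<subseteq> Ko"
  proof
    fix x assume "x \<in> region_bounded_by J"
    then consider "x \<in> J" | C where "C \<in> components (UHP - J)" "hbounded C" "x \<in> C"
      unfolding region_bounded_by_def by blast
    thus "x \<in> Ko"
    proof cases
      case 1 thus ?thesis using JK by blast
    next
      case 2
      show ?thesis
      proof (rule ccontr)
        assume xn: "x \<notin> Ko"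
        have xU: "x \<in> UHP" using 2 in_components_subset by blast
        have "UHP - Ko \<subseteq> C"
          by (rule components_maximal[OF 2(1) Lconn]) (use JK xn xU 2(3) in auto)
        hence "hbounded (UHP - Ko)" using 2(2) unfolding hbounded_def by blast
        thus False using Lunb by simp
      qed
    qed
  qed
  show ?thesis
  proof (intro ballI)
    fix x y assume x: "x \<in> hbox a b b' a' H" and y: "y \<in> hbox a b b' a' H"
    have "x \<in> Ko" "y \<in> Ko" using x y regK unfolding hbox_def J_def by auto
    hence "x \<in> UHP" "y \<in> UHP" "M x \<in> K" "M y \<in> K" by (auto simp: Ko_def)
    thus "hdist x y \<le> 2 * r"
      using Mdist diam_K[OF r sig tau] unfolding K_def by metis
  qed
qed


end
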